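(* Let $\gamma\in(0,1]$, let $A$ be a finite alphabet with $d$ letters, and let $\mathbb X=(\mathbb X_{st})_{s,t\in\mathbb R}$ be a $\gamma$-regular $\mathcal H^A_{\sqcup\!\sqcup}$-rough path (a geometric rough path over $\mathbb R^d$). Then $\widetilde{\mathbb X}_{st}:=\mathbb X_{st}\circ\mathfrak a_\ll$ defines a $\gamma$-regular planarly branched rough path, i.e. a $\gamma$-regular $\mathcal H^A_{\mathrm{MKW}}$-rough path.
   Context: $\mathcal H^A_{\sqcup\!\sqcup}$: words on $A$ (basis), graded by length, shuffle product, deconcatenation coproduct. $\mathcal H^A_{\mathrm{MKW}}$: basis the $A$-decorated planar forests (left-to-right ordered sequences of planar rooted trees with decorations in $A$), graded by number of vertices, product = shuffle of forests regarded as words in trees, coproduct $\Delta(\tau)=\sum(\tau|_{V'})^{\sqcup\!\sqcup}\otimes\tau|_{V''}$ over partitions $V(\tau)=V'\sqcup V''$ with $V''$ downward closed for $\ll$ ($\tau|_W$ the induced decorated planar forest; $(\tau|_{V'})^{\sqcup\!\sqcup}$ the shuffle product of the $\tau|_C$ over connected components $C$ of $(V',\ll|_{V'})$). Here $v<w$ iff $v\ne w$ and $v$ lies on the path from a root to $w$, and $\ll$ is the transitive closure of: $v<w$, or $v,w$ children of a common vertex with $v$ right of $w$, or $v,w$ roots with $v$ right of $w$. Planar arborification: $\mathfrak a_\ll(\tau)=\sum\varphi(v_1)\cdots\varphi(v_n)$ over enumerations of $V(\tau)$ with $v_i\ll v_j\Rightarrow i>j$. For a commutative Hopf algebra $\mathcal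 H$ with homogeneous basis $\mathcal B$, a $\gamma$-regular $\mathcal H$-rough path is a family $(\mathbb X_{st})_{s,t\in\mathbb R}$ of linear forms with $\langle\mathbb X_{st},\mathbf 1\rangle=1$, multiplicative ($\langle\mathbb X_{st},\sigma\tau\rangle=\langle\mathbb X_{st},\sigma\rangle\langle\mathbb X_{st},\tau\rangle$), satisfying Chen's relation $\mathbb X_{su}*\mathbb X_{ut}=\mathbb X_{st}$ (convolution w.r.t. the coproduct) and $\sup_{s\ne t}|\langle\mathbb X_{st},\sigma\rangle|/|t-s|^{\gamma|\sigma|}<\infty$ for each $\sigma\in\mathcal B$. *)

theory Defs
  imports Complex_Main "HOL-Library.Multiset"
begin

text \<open>Elements of the Hopf algebras that occur (products and coproducts of basis
elements) are sums of basis elements with multiplicities; they are represented as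
multisets of basis elements.\<close>

definition lin :: "('b \<Rightarrow> real) \<Rightarrow> 'b multiset \<Rightarrow> real" where
  "lin X M = sum_mset (image_mset X M)"

fun shuf :: "'b list \<Rightarrow> 'b list \<Rightarrow> 'b list multiset" where
  "shuf [] ys = {#ys#}"
| "shuf xs [] = {#xs#}"
| "shuf (x # xs) (y # ys) =
     image_mset (Cons x) (shuf xs (y # ys)) + image_mset (Cons y) (shuf (x # xs) ys)"

definition mshuf :: "'b list multiset \<Rightarrow> 'b list multiset \<Rightarrow> 'b list multiset" where
  "mshuf M N = (\<Sum>x\<in>#M. \<Sum>y\<in>#N. shuf x y)"

text \<open>Deconcatenation coproduct of words, as multiset of pairs (left tensor factor, right tensor factor).\<close>

definition deconc :: "'b list \<Rightarrow> ('b list \<times> 'b list) multiset" where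
  "deconc w = mset (map (\<lambda>k. (take k w, drop k w)) [0..<Suc (length w)])"

text \<open>The basis is the type \<open>'b\<close>; \<open>deg\<close> is the grading, \<open>prod\<close> the product of two
basis elements, \<open>cop\<close> the coproduct of a basis element (as a multiset of pairs of
basis elements), \<open>one\<close> the unit. \<open>X s t\<close> is the linear form \<open>\<bbbX>_{st}\<close> given on the basis.
The condition sup |<X_st,sigma>|/|t-s|^(gamma |sigma|) < infinity is written
as existence of a finite bound.\<close>

definition rough_path ::
  "real \<Rightarrow> ('b \<Rightarrow> nat) \<Rightarrow> ('b \<Rightarrow> 'b \<Rightarrow> 'b multiset) \<Rightarrow> ('b \<Rightarrow> ('b \<times> 'b) multiset)
    \<Rightarrow> 'b \<Rightarrow> (real \<Rightarrow> real \<Rightarrow> 'b \<Rightarrow> real) \<Rightarrow> bool" where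
  "rough_path \<gamma> deg mul cop one X \<longleftrightarrow>
     (\<forall>s t. X s t one = 1) \<and>
     (\<forall>s t \<sigma> \<tau>. lin (X s t) (mul \<sigma> \<tau>) = X s t \<sigma> * X s t \<tau>) \<and>
     (\<forall>s u t \<tau>. (\<Sum>p\<in>#cop \<tau>. X s u (fst p) * X u t (snd p)) = X s t \<tau>) \<and>
     (\<forall>\<sigma>. \<exists>C. \<forall>s t. s \<noteq> t \<longrightarrow> \<bar>X s t \<sigma>\<bar> \<le> C * \<bar>t - s\<bar> powr (\<gamma> * real (deg \<sigma>)))"

datatype 'a ptree = PNode 'a "'a ptree list"

type_synonym 'a pforest = "'a ptree list"

fun label :: "'a ptree \<Rightarrow> 'a" where "label (PNode a cs) = a"
fun children :: "'a ptree \<Rightarrow> 'a ptree list" where "children (PNode a cs) = cs"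

text \<open>Vertices of a planar forest are addressed by paths: \<open>[i0,i1,...,ik]\<close> is the
\<open>ik\<close>-th child of ... of the \<open>i1\<close>-th child of the \<open>i0\<close>-th root (indices counted
from the left, starting at 0).\<close>

fun subtree :: "'a pforest \<Rightarrow> nat list \<Rightarrow> 'a ptree option" where
  "subtree ts [] = None"
| "subtree ts [i] = (if i < length ts then Some (ts ! i) else None)"
| "subtree ts (i # j # p) = (if i < length ts then subtree (children (ts ! i)) (j # p) else None)"

definition verts :: "'a pforest \<Rightarrow> nat list set" where
  "verts f = {p. subtree f p \<noteq> None}"

definition dec :: "'a pforest \<Rightarrow> nat list \<Rightarrow> 'a" where
  "dec f p = label (the (subtree f p))"

definition below :: "nat list \<Rightarrow> nat list \<Rightarrow> bool" where
  "below v w \<longleftrightarrow> (\<exists>r. r \<noteq> [] \<and> w = v @ r)"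

text \<open>Generating relation of \<open>\<ll>\<close>: \<open>v < w\<close>, or \<open>v, w\<close> siblings (children of a common
vertex, or both roots -- the case \<open>p = []\<close>) with \<open>v\<close> to the right of \<open>w\<close>.\<close>

definition llgen :: "'a pforest \<Rightarrow> (nat list \<times> nat list) set" where
  "llgen f = {(v, w). v \<in> verts f \<and> w \<in> verts f \<and>
      (below v w \<or> (\<exists>p i j. v = p @ [i] \<and> w = p @ [j] \<and> j < i))}"

definition ll :: "'a pforest \<Rightarrow> (nat list \<times> nat list) set" where
  "ll f = (llgen f)\<^sup>+"

text \<open>Induced decorated planar forest on a vertex set \<open>W\<close>: vertices outside \<open>W\<close> are
removed, their kept descendants attached to the nearest kept ancestor (or become roots),
left-to-right order preserved.\<close>

fun restr_t :: "nat list \<Rightarrow> nat list set \<Rightarrow> 'a ptree \<Rightarrow> 'a pforest"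
and restr_f :: "nat list \<Rightarrow> nat \<Rightarrow> nat list set \<Rightarrow> 'a pforest \<Rightarrow> 'a pforest" where
  "restr_t p W (PNode a cs) =
     (if p \<in> W then [PNode a (restr_f p 0 W cs)] else restr_f p 0 W cs)"
| "restr_f p k W [] = []"
| "restr_f p k W (t # ts) = restr_t (p @ [k]) W t @ restr_f p (Suc k) W ts"

definition restr :: "'a pforest \<Rightarrow> nat list set \<Rightarrow> 'a pforest" where
  "restr f W = restr_f [] 0 W f"

definition comp_rel :: "'a pforest \<Rightarrow> nat list set \<Rightarrow> (nat list \<times> nat list) set" where
  "comp_rel f V' = {(u, w). u \<in> V' \<and> w \<in> V' \<and> ((u, w) \<in> ll f \<or> (w, u) \<in> ll f)}"

definition comps :: "'a pforest \<Rightarrow> nat list set \<Rightarrow> nat list set set" where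
  "comps f V' = {{w \<in> V'. (v, w) \<in> (comp_rel f V')\<^sup>*} | v. v \<in> V'}"

text \<open>\<open>(\<tau>|_{V'})^{\<sqcup>\<sqcup>}\<close>: shuffle product of the \<open>\<tau>|_C\<close> over the components \<open>C\<close>
(well defined since the shuffle product is commutative and associative).\<close>

definition shuf_comps :: "'a pforest \<Rightarrow> nat list set \<Rightarrow> 'a pforest multiset" where
  "shuf_comps f V' =
     fold_mset (\<lambda>C acc. mshuf {#restr f C#} acc) {#[]#} (mset_set (comps f V'))"

definition downclosed :: "'a pforest \<Rightarrow> nat list set \<Rightarrow> bool" where
  "downclosed f V'' \<longleftrightarrow> V'' \<subseteq> verts f \<and> (\<forall>v\<in>V''. \<forall>w. (w, v) \<in> ll f \<longrightarrow> w \<in> V'')"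

definition mkw_cop :: "'a pforest \<Rightarrow> ('a pforest \<times> 'a pforest) multiset" where
  "mkw_cop f = (\<Sum>V''\<in>{V''. downclosed f V''}.
      image_mset (\<lambda>\<sigma>. (\<sigma>, restr f V'')) (shuf_comps f (verts f - V'')))"

definition nverts :: "'a pforest \<Rightarrow> nat" where
  "nverts f = card (verts f)"

definition arb :: "'a pforest \<Rightarrow> 'a list multiset" where
  "arb f = image_mset (map (dec f))
     (mset_set {vs. distinct vs \<and> set vs = verts f \<and>
        (\<forall>i<length vs. \<forall>j<length vs. (vs ! i, vs ! j) \<in> ll f \<longrightarrow> i > j)})"

end

theory Submission
  imports Defs
begin


lemma shuf_Nil2[simp]: "shuf xs [] = {#xs#}" by (cases xs) auto

lemma shuf_comm: "shuf xs ys = shuf ys xs"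
  by (induction xs ys rule: shuf.induct) (auto simp: add.commute)

lemma shuf_map: "image_mset (map f) (shuf xs ys) = shuf (map f xs) (map f ys)"
proof (induction xs ys rule: shuf.induct)
  case (3 x xs y ys)
  have "image_mset (map f) (shuf (x#xs) (y#ys)) = image_mset (Cons (f x)) (image_mset (map f) (shuf xs (y#ys))) + image_mset (Cons (f y)) (image_mset (map f) (shuf (x#xs) ys))"
    by (simp add: multiset.map_comp o_def)
  then show ?case using 3 by simp
qed auto

lemma image_mset_sum_mset: "image_mset g (sum_mset MM) = sum_mset (image_mset (image_mset g) MM)"
  by (induction MM) auto

lemma sum_mset_singletons[simp]: "(\<Sum>z\<in>#M. {#z#}) = M"
  by (induction M) auto

lemma sum_mset_shuf_Nil[simp]: "(\<Sum>z\<in>#M. shuf [] z) = M"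
  by (induction M) auto

lemma shuf_Cons_Cons: "shuf (x # xs) (y # ys) =
     image_mset (Cons x) (shuf xs (y # ys)) + image_mset (Cons y) (shuf (x # xs) ys)"
  by simp

lemma shuf_assoc_aux:
  "(\<Sum>z\<in>#shuf x y. shuf z w) = (\<Sum>z\<in>#shuf y w. shuf x z)"
proof (induction "length x + length y + length w" arbitrary: x y w rule: less_induct)
  case less
  show ?case
  proof (cases "x = [] \<or> y = [] \<or> w = []")
    case True
    then show ?thesis by auto
  next
    case False
    then obtain a x' b y' c w' where xyw: "x = a # x'" "y = b # y'" "w = c # w'"
      by (meson list.exhaust)
    define L where "L x y w = (\<Sum>z\<in>#shuf x y. shuf z w)" for x y w :: "'a list"
    define R where "R x y w = (\<Sum>z\<in>#shuf y w. shuf x z)" for x y w :: "'a list"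
    have IH: "L x' y w = R x' y w" "L x y' w = R x y' w" "L x y w' = R x y w'"
      unfolding L_def R_def by (rule less(1); simp add: xyw)+
    have "L x y w = image_mset (Cons a) (L x' y w) + image_mset (Cons b) (L x y' w)
       + image_mset (Cons c) (L x y w')"
      unfolding L_def xyw
      by (simp add: image_mset_sum_mset sum_mset.distrib multiset.map_comp o_def add_ac)
    moreover have "R x y w = image_mset (Cons a) (R x' y w) + image_mset (Cons b) (R x y' w)
       + image_mset (Cons c) (R x y w')"
      unfolding R_def xyw
      by (simp add: image_mset_sum_mset sum_mset.distrib multiset.map_comp o_def add_ac)
    ultimately show ?thesis using IH unfolding L_def R_def by simp
  qed
qed

lemma shuf_assoc: "(\<Sum>z\<in>#shuf x y. shuf z w) = (\<Sum>z\<in>#shuf y w. shuf x z)"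
  by (rule shuf_assoc_aux)

lemma shuf_single_snoc:
  "shuf [x] (ys@[y]) = {#ys@[y,x]#} + image_mset (\<lambda>z. z@[y]) (shuf [x] ys)"
proof (induction ys)
  case Nil then show ?case by simp
next
  case (Cons b ys)
  have "shuf [x] ((b#ys)@[y]) = {#x#b#ys@[y]#} + image_mset (Cons b) (shuf [x] (ys@[y]))"
    by simp
  also have "\<dots> = {#x#b#ys@[y]#} + image_mset (Cons b) ({#ys@[y,x]#} + image_mset (\<lambda>z. z@[y]) (shuf [x] ys))"
    using Cons by simp
  finally show ?case by (simp add: multiset.map_comp o_def)
qed

lemma shuf_snoc:
  "shuf (xs@[x]) (ys@[y]) = image_mset (\<lambda>z. z@[x]) (shuf xs (ys@[y])) + image_mset (\<lambda>z. z@[y]) (shuf (xs@[x]) ys)"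
proof (induction xs arbitrary: ys)
  case Nil
  then show ?case by (simp add: shuf_single_snoc)
next
  case (Cons a xs)
  note IHo = Cons.IH
  show ?case
  proof (induction ys)
    case Nil
    have "shuf ((a#xs)@[x]) [y] = shuf [y] ((a#xs)@[x])" by (rule shuf_comm)
    also have "\<dots> = {#(a#xs)@[x,y]#} + image_mset (\<lambda>z. z@[x]) (shuf [y] (a#xs))"
      by (rule shuf_single_snoc)
    finally show ?case by (simp add: shuf_comm[of "[y]"])
  next
    case (Cons b ys)
    have "shuf ((a#xs)@[x]) ((b#ys)@[y]) = image_mset (Cons a) (shuf (xs@[x]) ((b#ys)@[y]))
         + image_mset (Cons b) (shuf ((a#xs)@[x]) (ys@[y]))" by simp
    also have "\<dots> = image_mset (Cons a) (image_mset (\<lambda>z. z@[x]) (shuf xs ((b#ys)@[y])) + image_mset (\<lambda>z. z@[y]) (shuf (xs@[x]) (b#ys)))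
         + image_mset (Cons b) (image_mset (\<lambda>z. z@[x]) (shuf (a#xs) (ys@[y])) + image_mset (\<lambda>z. z@[y]) (shuf ((a#xs)@[x]) ys))"
      using Cons.IH IHo[of "b#ys"] by simp
    finally show ?case by (simp add: multiset.map_comp o_def add_ac)
  qed
qed

definition sm :: "'b list \<Rightarrow> 'b list multiset" where "sm w = {#w#}"

lemma mshuf_add_left: "mshuf (M1 + M2) N = mshuf M1 N + mshuf M2 N"
  by (simp add: mshuf_def)
lemma mshuf_add_right: "mshuf M (N1 + N2) = mshuf M N1 + mshuf M N2"
  by (simp add: mshuf_def sum_mset.distrib)
lemma mshuf_empty_left[simp]: "mshuf {#} N = {#}" by (simp add: mshuf_def)
lemma mshuf_empty_right[simp]: "mshuf M {#} = {#}" by (simp add: mshuf_def)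
lemma mshuf_single_single[simp]: "mshuf {#x#} {#y#} = shuf x y" by (simp add: mshuf_def)
lemma mshuf_sum_left: "mshuf (\<Sum>i\<in>#I. F i) N = (\<Sum>i\<in>#I. mshuf (F i) N)"
  by (induction I) (auto simp: mshuf_add_left)
lemma mshuf_sum_right: "mshuf M (\<Sum>i\<in>#I. F i) = (\<Sum>i\<in>#I. mshuf M (F i))"
  by (induction I) (auto simp: mshuf_add_right)
lemma mshuf_sumset_left: "mshuf (\<Sum>i\<in>I. F i) N = (\<Sum>i\<in>I. mshuf (F i) N)"
  by (induction I rule: infinite_finite_induct) (auto simp: mshuf_add_left)
lemma mshuf_sumset_right: "mshuf M (\<Sum>i\<in>I. F i) = (\<Sum>i\<in>I. mshuf M (F i))"
  by (induction I rule: infinite_finite_induct) (auto simp: mshuf_add_right)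
lemma mshuf_unit_left[simp]: "mshuf {#[]#} M = M" by (simp add: mshuf_def)
lemma mshuf_unit_right[simp]: "mshuf M {#[]#} = M" by (simp add: mshuf_def)
lemma mshuf_comm: "mshuf M N = mshuf N M"
  unfolding mshuf_def by (subst sum_mset.swap) (simp add: shuf_comm)

lemma mshuf_alt: "mshuf M N = (\<Sum>x\<in>#M. \<Sum>y\<in>#N. mshuf {#x#} {#y#})"
  by (simp add: mshuf_def)

lemma mshuf_assoc: "mshuf (mshuf A B) C = mshuf A (mshuf B C)"
proof -
  have "mshuf (mshuf A B) C = (\<Sum>x\<in>#A. \<Sum>y\<in>#B. mshuf (shuf x y) C)"
    by (simp add: mshuf_def[of A B] mshuf_sum_left)
  also have "\<dots> = (\<Sum>x\<in>#A. \<Sum>y\<in>#B. \<Sum>c\<in>#C. \<Sum>z\<in>#shuf x y. shuf z c)"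
    by (simp add: mshuf_def, subst sum_mset.swap, simp)
  also have "\<dots> = (\<Sum>x\<in>#A. \<Sum>y\<in>#B. \<Sum>c\<in>#C. \<Sum>z\<in>#shuf y c. shuf x z)"
    by (simp add: shuf_assoc)
  also have "\<dots> = mshuf A (mshuf B C)"
  proof -
    have "mshuf A (mshuf B C) = (\<Sum>x\<in>#A. mshuf {#x#} (\<Sum>y\<in>#B. \<Sum>c\<in>#C. shuf y c))"
      by (simp add: mshuf_def)
    also have "\<dots> = (\<Sum>x\<in>#A. \<Sum>y\<in>#B. \<Sum>c\<in>#C. mshuf {#x#} (shuf y c))"
      by (simp add: mshuf_sum_right)
    finally show ?thesis by (simp add: mshuf_def)
  qed
  finally show ?thesis .
qed

lemma mshuf_cons: "mshuf (image_mset (Cons x) M) (image_mset (Cons y) N) =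
   image_mset (Cons x) (mshuf M (image_mset (Cons y) N)) + image_mset (Cons y) (mshuf (image_mset (Cons x) M) N)"
  by (simp add: mshuf_def image_mset_sum_mset sum_mset.distrib multiset.map_comp o_def)

lemma mshuf_snoc: "mshuf (image_mset (\<lambda>z. z@[x]) M) (image_mset (\<lambda>z. z@[y]) N) =
   image_mset (\<lambda>z. z@[x]) (mshuf M (image_mset (\<lambda>z. z@[y]) N)) + image_mset (\<lambda>z. z@[y]) (mshuf (image_mset (\<lambda>z. z@[x]) M) N)"
  by (simp add: mshuf_def image_mset_sum_mset sum_mset.distrib multiset.map_comp o_def shuf_snoc)

lemma mshuf_map: "image_mset (map d) (mshuf M N) = mshuf (image_mset (map d) M) (image_mset (map d) N)"
  by (simp add: mshuf_def image_mset_sum_mset multiset.map_comp o_def shuf_map)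

lemma lin_add[simp]: "lin X (M + N) = lin X M + lin X N" by (simp add: lin_def)
lemma lin_single[simp]: "lin X {#w#} = X w" by (simp add: lin_def)
lemma lin_empty[simp]: "lin X {#} = 0" by (simp add: lin_def)
lemma lin_sum_mset: "lin X (\<Sum>i\<in>#I. F i) = (\<Sum>i\<in>#I. lin X (F i))"
  by (induction I) auto
lemma lin_sum: "lin X (\<Sum>i\<in>I. F i) = (\<Sum>i\<in>I. lin X (F i))"
  by (induction I rule: infinite_finite_induct) auto
lemma lin_image: "lin X (image_mset f M) = (\<Sum>x\<in>#M. X (f x))"
  by (simp add: lin_def multiset.map_comp o_def)

lemma deconc_Nil[simp]: "deconc [] = {#([],[])#}" by (simp add: deconc_def)

lemma deconc_Cons: "deconc (x#w) = add_mset ([], x#w) (image_mset (\<lambda>p. (x#fst p, snd p)) (deconc w))"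
proof -
  have H: "[0..<Suc (length (x#w))] = 0 # map Suc [0..<Suc (length w)]"
    by (simp add: upt_conv_Cons map_Suc_upt del: upt_Suc)
  have L: "map (\<lambda>k. (take k (x#w), drop k (x#w))) [0..<Suc (length (x#w))] = ([], x#w) # map (\<lambda>p. (x#fst p, snd p)) (map (\<lambda>k. (take k w, drop k w)) [0..<Suc (length w)])"
    unfolding H by simp
  show ?thesis unfolding deconc_def L by (simp only: mset.simps mset_map)
qed

lemma deconc_snoc: "deconc (w@[a]) = add_mset (w@[a], []) (image_mset (\<lambda>p. (fst p, snd p@[a])) (deconc w))"
proof -
  have H: "[0..<Suc (length (w@[a]))] = [0..<Suc (length w)] @ [Suc (length w)]"
    by simp
  have L: "map (\<lambda>k. (take k (w@[a]), drop k (w@[a]))) [0..<Suc (length (w@[a]))]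
     = map (\<lambda>p. (fst p, snd p@[a])) (map (\<lambda>k. (take k w, drop k w)) [0..<Suc (length w)]) @ [(w@[a],[])]"
    unfolding H by auto
  show ?thesis unfolding deconc_def L by (simp only: mset_append mset_map mset.simps) simp
qed

lemma lin_prod_sum: "(\<Sum>x\<in>#M. \<Sum>y\<in>#N. (X x::real) * Y y) = (\<Sum>x\<in>#M. X x) * (\<Sum>y\<in>#N. Y y)"
  by (induction M) (auto simp: sum_mset_distrib_left algebra_simps)

lemma lin_mshuf:
  assumes "\<And>\<sigma> \<tau>. lin X (shuf \<sigma> \<tau>) = X \<sigma> * X \<tau>"
  shows "lin X (mshuf M N) = lin X M * lin X N"
proof -
  have "lin X (mshuf M N) = (\<Sum>x\<in>#M. \<Sum>y\<in>#N. lin X (shuf x y))"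
    by (simp add: mshuf_def lin_sum_mset)
  also have "\<dots> = (\<Sum>x\<in>#M. \<Sum>y\<in>#N. X x * X y)" by (simp add: assms)
  also have "\<dots> = lin X M * lin X N" unfolding lin_def by (rule lin_prod_sum)
  finally show ?thesis .
qed


lemma sum_deconc_Cons: "(\<Sum>p\<in>#deconc (x#z). F (fst p) (snd p)) = F [] (x#z) + (\<Sum>p\<in>#deconc z. F (x#fst p) (snd p))"
  by (simp add: deconc_Cons multiset.map_comp o_def)

lemma shuf_deconc:
  fixes F :: "'b list \<Rightarrow> 'b list \<Rightarrow> 'c::comm_monoid_add"
  shows "(\<Sum>z\<in>#shuf u v. \<Sum>p\<in>#deconc z. F (fst p) (snd p)) =
    (\<Sum>p1\<in>#deconc u. \<Sum>p2\<in>#deconc v. \<Sum>z1\<in>#shuf (fst p1) (fst p2). \<Sum>z2\<in>#shuf (snd p1) (snd p2). F z1 z2)"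
proof (induction u v arbitrary: F rule: shuf.induct)
  case (1 ys)
  then show ?case by simp
next
  case (2 x xs)
  then show ?case by simp
next
  case (3 x xs y ys)
  define G where "G p1 p2 = (\<Sum>z1\<in>#shuf (fst p1) (fst p2). \<Sum>z2\<in>#shuf (snd p1) (snd p2). F z1 z2)" for p1 p2 :: "'b list \<times> 'b list"
  have IH1: "(\<Sum>z\<in>#shuf xs (y#ys). \<Sum>p\<in>#deconc z. F (x#fst p) (snd p)) =
    (\<Sum>p1\<in>#deconc xs. \<Sum>p2\<in>#deconc (y#ys). \<Sum>z1\<in>#shuf (fst p1) (fst p2). \<Sum>z2\<in>#shuf (snd p1) (snd p2). F (x#z1) z2)"
    by (rule "3.IH"(1))
  have IH2: "(\<Sum>z\<in>#shuf (x#xs) ys. \<Sum>p\<in>#deconc z. F (y#fst p) (snd p)) =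
    (\<Sum>p1\<in>#deconc (x#xs). \<Sum>p2\<in>#deconc ys. \<Sum>z1\<in>#shuf (fst p1) (fst p2). \<Sum>z2\<in>#shuf (snd p1) (snd p2). F (y#z1) z2)"
    by (rule "3.IH"(2))
  have LHS: "(\<Sum>z\<in>#shuf (x#xs) (y#ys). \<Sum>p\<in>#deconc z. F (fst p) (snd p)) =
     (\<Sum>z\<in>#shuf (x#xs) (y#ys). F [] z) +
     (\<Sum>z\<in>#shuf xs (y#ys). \<Sum>p\<in>#deconc z. F (x#fst p) (snd p)) +
     (\<Sum>z\<in>#shuf (x#xs) ys. \<Sum>p\<in>#deconc z. F (y#fst p) (snd p))"
    by (simp add: sum_deconc_Cons sum_mset.distrib add_ac multiset.map_comp o_def)
  have R1: "(\<Sum>p1\<in>#deconc xs. \<Sum>p2\<in>#deconc (y#ys). \<Sum>z1\<in>#shuf (fst p1) (fst p2). \<Sum>z2\<in>#shuf (snd p1) (snd p2). F (x#z1) z2)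
     = (\<Sum>p1\<in>#deconc xs. G (x#fst p1, snd p1) ([], y#ys)) +
       (\<Sum>p1\<in>#deconc xs. \<Sum>p2\<in>#deconc ys. \<Sum>z1\<in>#shuf (fst p1) (y#fst p2). \<Sum>z2\<in>#shuf (snd p1) (snd p2). F (x#z1) z2)"
    by (simp add: G_def deconc_Cons sum_mset.distrib multiset.map_comp o_def)
  have R2: "(\<Sum>p1\<in>#deconc (x#xs). \<Sum>p2\<in>#deconc ys. \<Sum>z1\<in>#shuf (fst p1) (fst p2). \<Sum>z2\<in>#shuf (snd p1) (snd p2). F (y#z1) z2)
     = (\<Sum>p2\<in>#deconc ys. G ([], x#xs) (y#fst p2, snd p2)) +
       (\<Sum>p1\<in>#deconc xs. \<Sum>p2\<in>#deconc ys. \<Sum>z1\<in>#shuf (x#fst p1) (fst p2). \<Sum>z2\<in>#shuf (snd p1) (snd p2). F (y#z1) z2)"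
    by (simp add: G_def deconc_Cons sum_mset.distrib multiset.map_comp o_def)
  have RHS: "(\<Sum>p1\<in>#deconc (x#xs). \<Sum>p2\<in>#deconc (y#ys). G p1 p2) =
     G ([], x#xs) ([], y#ys) + (\<Sum>p2\<in>#deconc ys. G ([], x#xs) (y#fst p2, snd p2))
     + (\<Sum>p1\<in>#deconc xs. G (x#fst p1, snd p1) ([], y#ys))
     + (\<Sum>p1\<in>#deconc xs. \<Sum>p2\<in>#deconc ys. G (x#fst p1, snd p1) (y#fst p2, snd p2))"
    by (simp add: deconc_Cons sum_mset.distrib add_ac multiset.map_comp o_def)
  have G4: "G (x#a, b) (y#c, d) = (\<Sum>z1\<in>#shuf a (y#c). \<Sum>z2\<in>#shuf b d. F (x#z1) z2)
      + (\<Sum>z1\<in>#shuf (x#a) c. \<Sum>z2\<in>#shuf b d. F (y#z1) z2)" for a b c d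
    by (simp add: G_def multiset.map_comp o_def)
  have G1: "G ([], x#xs) ([], y#ys) = (\<Sum>z\<in>#shuf (x#xs) (y#ys). F [] z)"
    by (simp add: G_def)
  show ?case
    unfolding LHS IH1 IH2 R1 R2 G_def[symmetric] RHS G4 G1 sum_mset.distrib
    by (simp add: add_ac)
qed


definition ok :: "('v \<times> 'v) set \<Rightarrow> 'v list \<Rightarrow> bool" where
  "ok R vs \<longleftrightarrow> (\<forall>i<length vs. \<forall>j<length vs. (vs ! i, vs ! j) \<in> R \<longrightarrow> i > j)"

definition enums :: "'v set \<Rightarrow> ('v \<times> 'v) set \<Rightarrow> 'v list set" where
  "enums V R = {vs. distinct vs \<and> set vs = V \<and> ok R vs}"

definition tops :: "'v set \<Rightarrow> ('v \<times> 'v) set \<Rightarrow> 'v set" where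
  "tops V R = {z\<in>V. \<forall>y\<in>V. (z, y) \<notin> R}"

lemma arb_enums: "arb f = image_mset (map (dec f)) (mset_set (enums (verts f) (ll f)))"
  by (simp add: arb_def enums_def ok_def)

lemma finite_enums: "finite V \<Longrightarrow> finite (enums V R)"
proof -
  assume "finite V"
  have "enums V R \<subseteq> {xs. set xs \<subseteq> V \<and> length xs \<le> card V}"
    by (auto simp: enums_def distinct_card[symmetric])
  then show ?thesis using finite_lists_length_le[OF \<open>finite V\<close>] finite_subset by blast
qed

lemma enums_empty[simp]: "enums {} R = {[]}"
  by (auto simp: enums_def ok_def)

lemma ok_Nil[simp]: "ok R []" by (simp add: ok_def)

lemma ok_Cons: "ok R (z#w) \<longleftrightarrow> ok R w \<and> (z,z) \<notin> R \<and> (\<forall>y\<in>set w. (z,y) \<notin> R)"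
proof
  assume A: "ok R (z#w)"
  have "ok R w"
    unfolding ok_def
  proof (intro allI impI)
    fix i j assume "i < length w" "j < length w" "(w!i, w!j) \<in> R"
    then show "i > j" using A[unfolded ok_def, rule_format, of "Suc i" "Suc j"] by simp
  qed
  moreover have "(z,z) \<notin> R" using A[unfolded ok_def, rule_format, of 0 0] by auto
  moreover have "\<forall>y\<in>set w. (z,y) \<notin> R"
  proof
    fix y assume "y \<in> set w"
    then obtain j where "j < length w" "w!j = y" by (auto simp: in_set_conv_nth)
    then show "(z,y) \<notin> R" using A[unfolded ok_def, rule_format, of 0 "Suc j"] by auto
  qed
  ultimately show "ok R w \<and> (z,z) \<notin> R \<and> (\<forall>y\<in>set w. (z,y) \<notin> R)" by blast
next
  assume A: "ok R w \<and> (z,z) \<notin> R \<and> (\<forall>y\<in>set w. (z,y) \<notin> R)"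
  show "ok R (z#w)"
    unfolding ok_def
  proof (intro allI impI)
    fix i j assume ij: "i < length (z#w)" "j < length (z#w)" "((z#w)!i, (z#w)!j) \<in> R"
    show "i > j"
    proof (cases i)
      case 0
      then show ?thesis using ij A by (cases j) auto
    next
      case (Suc i')
      show ?thesis
      proof (cases j)
        case 0 then show ?thesis using Suc by simp
      next
        case (Suc j')
        then show ?thesis using \<open>i = Suc i'\<close> ij A unfolding ok_def by auto
      qed
    qed
  qed
qed

lemma ok_snoc: "ok R (w@[m]) \<longleftrightarrow> ok R w \<and> (m,m) \<notin> R \<and> (\<forall>y\<in>set w. (y,m) \<notin> R)"
proof
  assume A: "ok R (w@[m])"
  have "ok R w"
    unfolding ok_def
  proof (intro allI impI)
    fix i j assume "i < length w" "j < length w" "(w!i, w!j) \<in> R"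
    then show "i > j" using A[unfolded ok_def, rule_format, of i j] by (simp add: nth_append)
  qed
  moreover have "(m,m) \<notin> R" using A[unfolded ok_def, rule_format, of "length w" "length w"] by auto
  moreover have "\<forall>y\<in>set w. (y,m) \<notin> R"
  proof
    fix y assume "y \<in> set w"
    then obtain j where "j < length w" "w!j = y" by (auto simp: in_set_conv_nth)
    then show "(y,m) \<notin> R" using A[unfolded ok_def, rule_format, of j "length w"] by (auto simp: nth_append)
  qed
  ultimately show "ok R w \<and> (m,m) \<notin> R \<and> (\<forall>y\<in>set w. (y,m) \<notin> R)" by blast
next
  assume A: "ok R w \<and> (m,m) \<notin> R \<and> (\<forall>y\<in>set w. (y,m) \<notin> R)"
  show "ok R (w@[m])"
    unfolding ok_def
  proof (intro allI impI)
    fix i j assume ij: "i < length (w@[m])" "j < length (w@[m])" "((w@[m])!i, (w@[m])!j) \<in> R"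
    show "i > j"
    proof (cases "i < length w")
      case True
      show ?thesis
      proof (cases "j < length w")
        case True
        then show ?thesis using \<open>i < length w\<close> ij A unfolding ok_def by (auto simp: nth_append)
      next
        case False
        then have "j = length w" using ij by simp
        then show ?thesis using True ij A by (auto simp: nth_append)
      qed
    next
      case False
      then have "i = length w" using ij by simp
      then show ?thesis using ij A by (auto simp: nth_append split: if_splits)
    qed
  qed
qed

lemma ok_cong: "(\<And>x y. x \<in> set vs \<Longrightarrow> y \<in> set vs \<Longrightarrow> (x,y) \<in> R \<longleftrightarrow> (x,y) \<in> R') \<Longrightarrow> ok R vs = ok R' vs"
  unfolding ok_def by (metis nth_mem)

lemma enums_cong: "(\<And>x y. x \<in> V \<Longrightarrow> y \<in> V \<Longrightarrow> (x,y) \<in> R \<longleftrightarrow> (x,y) \<in> R') \<Longrightarrow> enums V R = enums V R'"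
  unfolding enums_def using ok_cong by blast

lemma ok_map:
  assumes H: "\<And>x y. x \<in> set vs \<Longrightarrow> y \<in> set vs \<Longrightarrow> (f x, f y) \<in> R' \<longleftrightarrow> (x,y) \<in> R"
  shows "ok R' (map f vs) = ok R vs"
proof -
  have "\<And>i j. i<length vs \<Longrightarrow> j<length vs \<Longrightarrow> ((f (vs!i), f(vs!j)) \<in> R') = ((vs!i,vs!j)\<in>R)"
    using H nth_mem by blast
  then show ?thesis unfolding ok_def by auto
qed

lemma enums_map:
  assumes inj: "inj_on f V" and rel: "\<And>x y. x \<in> V \<Longrightarrow> y \<in> V \<Longrightarrow> (f x, f y) \<in> R' \<longleftrightarrow> (x,y) \<in> R"
  shows "enums (f ` V) R' = map f ` enums V R"
proof
  show "map f ` enums V R \<subseteq> enums (f ` V) R'"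
  proof
    fix ws assume "ws \<in> map f ` enums V R"
    then obtain vs where vs: "vs \<in> enums V R" "ws = map f vs" by auto
    then show "ws \<in> enums (f ` V) R'"
      using inj ok_map[of vs f R' R] rel unfolding enums_def
      by (auto simp: distinct_map inj_on_subset)
  qed
next
  show "enums (f ` V) R' \<subseteq> map f ` enums V R"
  proof
    fix ws assume ws: "ws \<in> enums (f ` V) R'"
    define g where "g = the_inv_into V f"
    have gf: "\<And>x. x \<in> V \<Longrightarrow> g (f x) = x" using inj by (simp add: g_def the_inv_into_f_f)
    have fg: "\<And>y. y \<in> f ` V \<Longrightarrow> f (g y) = y" using inj by (simp add: g_def f_the_inv_into_f)
    have gV: "\<And>y. y \<in> f ` V \<Longrightarrow> g y \<in> V" using gf by auto
    define vs where "vs = map g ws"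
    have "map f vs = ws" unfolding vs_def map_map by (rule map_idI) (use ws fg in \<open>auto simp: enums_def\<close>)
    then have "ws = map f vs" by simp
    moreover have "vs \<in> enums V R"
    proof -
      have "set vs = V" using ws gf unfolding vs_def enums_def by force
      moreover have "distinct vs" using ws \<open>ws = map f vs\<close> unfolding enums_def by (simp add: distinct_map)
      moreover have "ok R vs" using ws \<open>ws = map f vs\<close> ok_map[of vs f R' R] rel \<open>set vs = V\<close>
        unfolding enums_def by auto
      ultimately show ?thesis by (simp add: enums_def)
    qed
    ultimately show "ws \<in> map f ` enums V R" by blast
  qed
qed

lemma mset_set_UN:
  "finite I \<Longrightarrow> (\<And>i. i \<in> I \<Longrightarrow> finite (A i)) \<Longrightarrow> (\<And>i j. i \<in> I \<Longrightarrow> j \<in> I \<Longrightarrow> i \<noteq> j \<Longrightarrow> A i \<inter> A j = {})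
   \<Longrightarrow> mset_set (\<Union>i\<in>I. A i) = (\<Sum>i\<in>I. mset_set (A i))"
proof (induction I rule: finite_induct)
  case (insert x F)
  have "mset_set (\<Union>i\<in>insert x F. A i) = mset_set (A x \<union> (\<Union>i\<in>F. A i))" by simp
  also have "\<dots> = mset_set (A x) + mset_set (\<Union>i\<in>F. A i)"
    using insert by (intro mset_set_Union) auto
  finally show ?case using insert by simp
qed simp

lemma enums_head_set:
  assumes "V \<noteq> {}"
  shows "enums V R = (\<Union>z\<in>tops V R. Cons z ` enums (V - {z}) R)"
proof
  show "enums V R \<subseteq> (\<Union>z\<in>tops V R. Cons z ` enums (V - {z}) R)"
  proof
    fix vs assume vs: "vs \<in> enums V R"
    then obtain z w where zw: "vs = z # w" using assms by (cases vs) (auto simp: enums_def)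
    then show "vs \<in> (\<Union>z\<in>tops V R. Cons z ` enums (V - {z}) R)"
      using vs by (auto simp: enums_def tops_def ok_Cons)
  qed
next
  show "(\<Union>z\<in>tops V R. Cons z ` enums (V - {z}) R) \<subseteq> enums V R"
    by (auto simp: enums_def tops_def ok_Cons)
qed

lemma enums_head:
  assumes "finite V" "V \<noteq> {}"
  shows "mset_set (enums V R) = (\<Sum>z\<in>tops V R. image_mset (Cons z) (mset_set (enums (V - {z}) R)))"
proof -
  have "mset_set (enums V R) = (\<Sum>z\<in>tops V R. mset_set (Cons z ` enums (V - {z}) R))"
    unfolding enums_head_set[OF assms(2)]
    by (rule mset_set_UN) (auto simp: tops_def assms finite_enums)
  also have "\<dots> = (\<Sum>z\<in>tops V R. image_mset (Cons z) (mset_set (enums (V - {z}) R)))"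
    by (simp add: image_mset_mset_set)
  finally show ?thesis .
qed

lemma enums_last:
  assumes "m \<in> V" "(m,m) \<notin> R" "\<And>x. x \<in> V \<Longrightarrow> x \<noteq> m \<Longrightarrow> (m,x) \<in> R \<and> (x,m) \<notin> R"
  shows "enums V R = (\<lambda>w. w@[m]) ` enums (V - {m}) R"
proof
  show "(\<lambda>w. w@[m]) ` enums (V - {m}) R \<subseteq> enums V R"
    using assms by (auto simp: enums_def ok_snoc)
next
  show "enums V R \<subseteq> (\<lambda>w. w@[m]) ` enums (V - {m}) R"
  proof
    fix vs assume vs: "vs \<in> enums V R"
    then have "vs \<noteq> []" using assms by (auto simp: enums_def)
    then obtain w x where wx: "vs = w @ [x]" by (metis rev_exhaust)
    have "x = m"
    proof (rule ccontr)
      assume "x \<noteq> m"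
      have "m \<in> set w" using vs wx \<open>x \<noteq> m\<close> assms(1) by (auto simp: enums_def)
      moreover have "x \<in> V" using vs wx by (auto simp: enums_def)
      ultimately show False using vs wx assms(3)[of x] \<open>x \<noteq> m\<close> by (auto simp: enums_def ok_snoc)
    qed
    then show "vs \<in> (\<lambda>w. w@[m]) ` enums (V - {m}) R"
      using vs wx by (auto simp: enums_def ok_snoc)
  qed
qed

lemma image_mset_sum: "image_mset f (\<Sum>i\<in>I. M i) = (\<Sum>i\<in>I. image_mset f (M i))"
  by (induction I rule: infinite_finite_induct) auto

lemma enums_union:
  assumes "finite A" "finite B" "A \<inter> B = {}"
    and "\<And>a b. a \<in> A \<Longrightarrow> b \<in> B \<Longrightarrow> (a,b) \<notin> R \<and> (b,a) \<notin> R"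
  shows "mset_set (enums (A \<union> B) R) = mshuf (mset_set (enums A R)) (mset_set (enums B R))"
  using assms
proof (induction "card A + card B" arbitrary: A B rule: less_induct)
  case less
  show ?case
  proof (cases "A = {} \<or> B = {}")
    case True
    then show ?thesis by auto
  next
    case False
    then have ne: "A \<noteq> {}" "B \<noteq> {}" by auto
    define E where "E S = mset_set (enums S R)" for S
    have tAB: "tops (A \<union> B) R = tops A R \<union> tops B R" using less.prems(4) by (auto simp: tops_def)
    have tA: "tops A R \<subseteq> A" and tB: "tops B R \<subseteq> B" by (auto simp: tops_def)
    have finT: "finite (tops A R)" "finite (tops B R)" by (meson finite_subset less.prems(1,2) tA tB)+
    have dT: "tops A R \<inter> tops B R = {}" using tA tB less.prems(3) by blast
    have IHA: "E (A \<union> B - {z}) = mshuf (E (A - {z})) (E B)" if "z \<in> tops A R" for z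
    proof -
      have zA: "z \<in> A" using that tA by blast
      have "A \<union> B - {z} = (A - {z}) \<union> B" using zA less.prems(3) by blast
      moreover have "card (A - {z}) + card B < card A + card B"
        using zA less.prems(1) by (metis add_less_mono1 card_Diff1_less)
      ultimately show ?thesis unfolding E_def
        using less.hyps[of "A - {z}" B] less.prems by auto
    qed
    have IHB: "E (A \<union> B - {z}) = mshuf (E A) (E (B - {z}))" if "z \<in> tops B R" for z
    proof -
      have zB: "z \<in> B" using that tB by blast
      have "A \<union> B - {z} = A \<union> (B - {z})" using zB less.prems(3) by blast
      moreover have "card A + card (B - {z}) < card A + card B"
        using zB less.prems(2) by (metis add_less_mono card_Diff1_less le_refl nat_add_left_cancel_less)
      ultimately show ?thesis unfolding E_def
        using less.hyps[of A "B - {z}"] less.prems by auto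
    qed
    have HA: "E A = (\<Sum>x\<in>tops A R. image_mset (Cons x) (E (A - {x})))"
      unfolding E_def using enums_head less.prems ne by blast
    have HB: "E B = (\<Sum>y\<in>tops B R. image_mset (Cons y) (E (B - {y})))"
      unfolding E_def using enums_head less.prems ne by blast
    have "E (A \<union> B) = (\<Sum>z\<in>tops (A \<union> B) R. image_mset (Cons z) (E (A \<union> B - {z})))"
      unfolding E_def using enums_head less.prems ne by blast
    also have "\<dots> = (\<Sum>z\<in>tops A R. image_mset (Cons z) (E (A \<union> B - {z})))
        + (\<Sum>z\<in>tops B R. image_mset (Cons z) (E (A \<union> B - {z})))"
      unfolding tAB by (rule sum.union_disjoint[OF finT dT])
    also have "\<dots> = (\<Sum>x\<in>tops A R. image_mset (Cons x) (mshuf (E (A - {x})) (E B)))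
        + (\<Sum>y\<in>tops B R. image_mset (Cons y) (mshuf (E A) (E (B - {y}))))"
      using IHA IHB by simp
    also have "\<dots> = mshuf (E A) (E B)"
    proof -
      have "mshuf (E A) (E B) = (\<Sum>x\<in>tops A R. \<Sum>y\<in>tops B R.
          mshuf (image_mset (Cons x) (E (A - {x}))) (image_mset (Cons y) (E (B - {y}))))"
        by (subst HA, subst HB) (simp add: mshuf_sumset_left mshuf_sumset_right sum.swap[of _ "tops B R"])
      also have "\<dots> = (\<Sum>x\<in>tops A R. \<Sum>y\<in>tops B R.
           image_mset (Cons x) (mshuf (E (A - {x})) (image_mset (Cons y) (E (B - {y})))))
          + (\<Sum>x\<in>tops A R. \<Sum>y\<in>tops B R.
           image_mset (Cons y) (mshuf (image_mset (Cons x) (E (A - {x}))) (E (B - {y}))))"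
        by (simp add: mshuf_cons sum.distrib)
      also have "\<dots> = (\<Sum>x\<in>tops A R. image_mset (Cons x) (mshuf (E (A - {x})) (E B)))
          + (\<Sum>y\<in>tops B R. image_mset (Cons y) (mshuf (E A) (E (B - {y}))))"
        by (subst (2) sum.swap) (simp add: HA HB mshuf_sumset_left mshuf_sumset_right image_mset_sum)
      finally show ?thesis by simp
    qed
    finally show ?thesis unfolding E_def .
  qed
qed


lemma subtree_app:
  "p \<noteq> [] \<Longrightarrow> subtree ts (p@q) = (case subtree ts p of None \<Rightarrow> None
     | Some t \<Rightarrow> (if q = [] then Some t else subtree (children t) q))"
proof (induction p arbitrary: ts)
  case Nil then show ?case by simp
next
  case (Cons i p)
  show ?case
  proof (cases p)
    case Nil
    then show ?thesis by (cases q) auto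
  next
    case (Cons j p')
    then show ?thesis using Cons.IH by auto
  qed
qed

lemma subtree_Nil[simp]: "subtree ts [] = None" by simp

lemma verts_nonempty: "p \<in> verts f \<Longrightarrow> p \<noteq> []"
  by (auto simp: verts_def)

lemma verts_prefix: "p \<noteq> [] \<Longrightarrow> p @ q \<in> verts f \<Longrightarrow> p \<in> verts f"
  by (auto simp: verts_def subtree_app split: option.splits)

lemma verts_sibling: "p @ [i] \<in> verts f \<Longrightarrow> j \<le> i \<Longrightarrow> p @ [j] \<in> verts f"
proof -
  assume A: "p @ [i] \<in> verts f" "j \<le> i"
  show ?thesis
  proof (cases "p = []")
    case True
    then show ?thesis using A by (auto simp: verts_def split: if_splits)
  next
    case False
    then show ?thesis using A
      by (auto simp: verts_def subtree_app split: option.splits if_splits)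
  qed
qed

definition L0 :: "nat list \<Rightarrow> nat list \<Rightarrow> bool" where
  "L0 v w \<longleftrightarrow> below v w \<or> (\<exists>p i j r. v = p@[i] \<and> w = p@[j]@r \<and> j < i)"



lemma L0_trans: assumes "L0 u v" "L0 v w" shows "L0 u w"
proof -
  from assms(1) show ?thesis
  proof (unfold L0_def below_def, elim disjE exE conjE)
    fix r1 assume r1: "r1 \<noteq> []" "v = u @ r1"
    from assms(2) show "(\<exists>r. r \<noteq> [] \<and> w = u @ r) \<or> (\<exists>p i j r. u = p @ [i] \<and> w = p @ [j] @ r \<and> j < i)"
    proof (unfold L0_def below_def, elim disjE exE conjE)
      fix r2 assume "r2 \<noteq> []" "w = v @ r2"
      then show ?thesis using r1 by auto
    next
      fix p i j r assume H: "v = p @ [i]" "w = p @ [j] @ r" "j < i"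
      obtain r1' x where rx: "r1 = r1' @ [x]" using r1(1) by (metis rev_exhaust)
      then have "(u @ r1') @ [x] = p @ [i]" using r1 H by simp
      then have "p = u @ r1'" "x = i" by (simp_all only: append1_eq_conv)
      then show ?thesis using H rx by auto
    qed
  next
    fix p i j r assume H1: "u = p @ [i]" "v = p @ [j] @ r" "j < i"
    from assms(2) show "(\<exists>r. r \<noteq> [] \<and> w = u @ r) \<or> (\<exists>p i j r. u = p @ [i] \<and> w = p @ [j] @ r \<and> j < i)"
    proof (unfold L0_def below_def, elim disjE exE conjE)
      fix r2 assume "r2 \<noteq> []" "w = v @ r2"
      then show ?thesis using H1 by auto
    next
      fix p' i' j' r' assume H2: "v = p' @ [i'] " "w = p' @ [j'] @ r'" "j' < i'"
      show ?thesis
      proof (cases "r = []")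
        case True
        then have "p = p'" "j = i'" using H1 H2 by auto
        then show ?thesis using H1 H2 by auto
      next
        case False
        obtain r0 x where rx: "r = r0 @ [x]" using False by (metis rev_exhaust)
        then have "(p @ [j] @ r0) @ [x] = p' @ [i']" using H1 H2 by simp
        then have "p' = p @ [j] @ r0" "x = i'" by (simp_all only: append1_eq_conv)
        then show ?thesis using H1 H2 rx by auto
      qed
    qed
  qed
qed

lemma ll_char: "ll f = {(v,w). v \<in> verts f \<and> w \<in> verts f \<and> L0 v w}"
proof
  let ?S = "{(v,w). v \<in> verts f \<and> w \<in> verts f \<and> L0 v w}"
  have G: "(v,w) \<in> llgen f \<Longrightarrow> (v,w) \<in> ?S" for v w
  proof -
    assume "(v,w) \<in> llgen f"
    then have A: "v \<in> verts f" "w \<in> verts f" "below v w \<or> (\<exists>p i j. v = p @ [i] \<and> w = p @ [j] \<and> j < i)"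
      unfolding llgen_def by auto
    have "L0 v w" using A(3) unfolding L0_def
    proof (elim disjE exE conjE)
      fix p i j assume "v = p @ [i]" "w = p @ [j]" "j < i"
      then show "below v w \<or> (\<exists>p i j r. v = p @ [i] \<and> w = p @ [j] @ r \<and> j < i)"
        by (intro disjI2 exI[of _ p] exI[of _ i] exI[of _ j] exI[of _ "[]"]) simp
    qed simp
    then show ?thesis using A by simp
  qed
  have "(v,w) \<in> (llgen f)\<^sup>+ \<Longrightarrow> (v,w) \<in> ?S" for v w
  proof (induction rule: trancl_induct)
    case (base y) then show ?case using G by blast
  next
    case (step y z) then show ?case using G L0_trans by blast
  qed
  then show "ll f \<subseteq> ?S" unfolding ll_def by auto
next
  show "{(v,w). v \<in> verts f \<and> w \<in> verts f \<and> L0 v w} \<subseteq> ll f"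
  proof (clarify)
    fix v w assume H: "v \<in> verts f" "w \<in> verts f" "L0 v w"
    show "(v, w) \<in> ll f"
    proof (cases "below v w")
      case True
      then show ?thesis using H unfolding ll_def llgen_def by auto
    next
      case False
      then obtain p i j r where P: "v = p@[i]" "w = p@[j]@r" "j < i" using H(3) by (auto simp: L0_def)
      have pj: "p@[j] \<in> verts f" using H(2) P verts_prefix[of "p@[j]" r f] by auto
      have 1: "(v, p@[j]) \<in> llgen f" using H pj P unfolding llgen_def by blast
      show ?thesis
      proof (cases "r = []")
        case True then show ?thesis using 1 P unfolding ll_def by auto
      next
        case False
        then have "(p@[j], w) \<in> llgen f" using H pj P unfolding llgen_def below_def by auto
        then show ?thesis using 1 unfolding ll_def by auto
      qed
    qed
  qed
qed



lemma subtree_snoc: "subtree (ts@[T]) (i#q) = (if i < length ts then subtree ts (i#q)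
   else if i = length ts then (if q = [] then Some T else subtree (children T) q) else None)"
  by (cases q) (auto simp: nth_append)

lemma subtree_hd: assumes "subtree ts (i#q) \<noteq> None" shows "i < length ts"
proof (cases q)
  case Nil then show ?thesis using assms by (auto split: if_splits)
next
  case (Cons j q') then show ?thesis using assms by (auto split: if_splits)
qed

lemma verts_hd: "i#q \<in> verts ts \<Longrightarrow> i < length ts"
  using subtree_hd unfolding verts_def by blast

lemma verts_snoc: "verts (ts@[PNode a cs]) = verts ts \<union> {[length ts]} \<union> Cons (length ts) ` verts cs"
proof -
  have "p \<in> verts (ts@[PNode a cs]) \<longleftrightarrow> p \<in> verts ts \<union> {[length ts]} \<union> Cons (length ts) ` verts cs" for p
  proof (cases p)
    case Nil then show ?thesis by (auto simp: verts_def)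
  next
    case (Cons i q)
    have e: "p \<in> verts (ts@[PNode a cs]) \<longleftrightarrow> subtree (ts@[PNode a cs]) (i#q) \<noteq> None"
      by (simp add: verts_def Cons)
    consider "i < length ts" | "i = length ts" | "i > length ts" by linarith
    then show ?thesis
    proof cases
      case 1
      then show ?thesis unfolding e subtree_snoc using Cons
        by (auto simp: verts_def)
    next
      case 2
      show ?thesis
      proof (cases "q = []")
        case True then show ?thesis unfolding e subtree_snoc using Cons 2 by simp
      next
        case False
        then have "p \<notin> verts ts" using Cons 2 verts_hd by blast
        then show ?thesis unfolding e subtree_snoc using Cons 2 False by (auto simp: verts_def)
      qed
    next
      case 3
      then have "p \<notin> verts ts" using Cons verts_hd by fastforce
      then show ?thesis unfolding e subtree_snoc using Cons 3 by auto
    qed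
  qed
  then show ?thesis by blast
qed

lemma verts_Nil[simp]: "verts ([]::'a pforest) = {}" 
proof -
  have "subtree ([]::'a pforest) p = None" for p :: "nat list"
  proof (cases p)
    case (Cons i q) then show ?thesis using subtree_hd[of "[]" i q] by (metis less_nat_zero_code list.size(3))
  qed simp
  then show ?thesis by (simp add: verts_def)
qed

lemma forest_induct[case_names Nil snoc]:
  assumes "P []" "\<And>ts a cs. P ts \<Longrightarrow> P cs \<Longrightarrow> P (ts@[PNode a cs])"
  shows "P f"
proof (induction "size_list size f" arbitrary: f rule: less_induct)
  case less
  show ?case
  proof (cases f rule: rev_cases)
    case Nil then show ?thesis using assms by simp
  next
    case (snoc ts t)
    obtain a cs where t: "t = PNode a cs" by (cases t)
    have "size_list size ts < size_list size f" "size_list size cs < size_list size f"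
      using snoc t by auto
    then show ?thesis using less assms(2) snoc t by auto
  qed
qed

lemma finite_verts: "finite (verts f)"
  by (induction f rule: forest_induct) (auto simp: verts_snoc)

lemma dec_snoc1: "p \<in> verts ts \<Longrightarrow> dec (ts@[T]) p = dec ts p"
proof -
  assume "p \<in> verts ts"
  then obtain i q where "p = i#q" "i < length ts" using verts_nonempty[of p ts]
    by (metis list.exhaust verts_hd)
  then show ?thesis by (simp add: dec_def subtree_snoc)
qed

lemma dec_snoc2: "dec (ts@[PNode a cs]) [length ts] = a"
  by (simp add: dec_def subtree_snoc)

lemma dec_snoc3: "q \<in> verts cs \<Longrightarrow> dec (ts@[PNode a cs]) (length ts # q) = dec cs q"
  using verts_nonempty[of q cs] by (simp add: dec_def subtree_snoc)

lemma L0_cross1: "v \<in> verts ts \<Longrightarrow> q \<in> verts cs \<Longrightarrow> \<not> L0 v (length ts # q)"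
proof
  assume v: "v \<in> verts ts" and q: "q \<in> verts cs" and L: "L0 v (length ts # q)"
  obtain i r where vi: "v = i#r" "i < length ts" using v verts_nonempty[of v ts]
    by (metis list.exhaust verts_hd)
  from L show False unfolding L0_def below_def
  proof (elim disjE exE conjE)
    fix r' assume "length ts # q = v @ r'" then show False using vi by simp
  next
    fix p i' j r' assume H: "v = p @ [i']" "length ts # q = p @ [j] @ r'" "j < i'"
    show False
    proof (cases p)
      case Nil then show ?thesis using H vi by simp
    next
      case (Cons k p') then show ?thesis using H vi by simp
    qed
  qed
qed

lemma L0_cross2: "v \<in> verts ts \<Longrightarrow> q \<in> verts cs \<Longrightarrow> \<not> L0 (length ts # q) v"
proof
  assume v: "v \<in> verts ts" and q: "q \<in> verts cs" and L: "L0 (length ts # q) v"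
  obtain i r where vi: "v = i#r" "i < length ts" using v verts_nonempty[of v ts]
    by (metis list.exhaust verts_hd)
  have qne: "q \<noteq> []" using q verts_nonempty by blast
  from L show False unfolding L0_def below_def
  proof (elim disjE exE conjE)
    fix r' assume "v = (length ts # q) @ r'" then show False using vi by simp
  next
    fix p i' j r' assume H: "length ts # q = p @ [i']" "v = p @ [j] @ r'" "j < i'"
    show False
    proof (cases p)
      case Nil then show ?thesis using H qne by simp
    next
      case (Cons k p') then show ?thesis using H vi by simp
    qed
  qed
qed

lemma L0_root: "x \<in> verts (ts@[PNode a cs]) \<Longrightarrow> x \<noteq> [length ts] \<Longrightarrow> L0 [length ts] x"
proof -
  assume x: "x \<in> verts (ts@[PNode a cs])" "x \<noteq> [length ts]"
  then have "x \<in> verts ts \<or> x \<in> Cons (length ts) ` verts cs" unfolding verts_snoc by blast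
  then show ?thesis
  proof
    assume "x \<in> verts ts"
    then obtain i r where ir: "x = i#r" "i < length ts" using verts_nonempty[of x ts]
      by (metis list.exhaust verts_hd)
    show ?thesis unfolding L0_def
      by (rule disjI2, rule exI[of _ "[]"], rule exI[of _ "length ts"], rule exI[of _ i], rule exI[of _ r]) (simp add: ir)
  next
    assume "x \<in> Cons (length ts) ` verts cs"
    then obtain q where q: "x = length ts # q" "q \<in> verts cs" by blast
    then have "q \<noteq> []" using verts_nonempty by blast
    then show ?thesis unfolding L0_def below_def using q by (intro disjI1 exI[of _ q]) simp
  qed
qed

lemma L0_root2: "x \<in> verts (ts@[PNode a cs]) \<Longrightarrow> \<not> L0 x [length ts]"
proof
  assume x: "x \<in> verts (ts@[PNode a cs])" and L: "L0 x [length ts]"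
  have xne: "x \<noteq> []" using x verts_nonempty by blast
  show False
  proof (cases "below x [length ts]")
    case True
    then obtain r where "r \<noteq> []" "[length ts] = x @ r" unfolding below_def by blast
    then show False using xne by (cases x) auto
  next
    case False
    then obtain p i j r where H: "x = p @ [i]" "[length ts] = p @ [j] @ r" "j < i"
      using L unfolding L0_def by blast
    then have "p = []" "j = length ts" by (cases p; simp)+
    then have xi: "x = [i]" "i > length ts" using H by auto
    have "x \<in> verts ts \<or> x = [length ts] \<or> x \<in> Cons (length ts) ` verts cs"
      using x unfolding verts_snoc by blast
    then show False
    proof (elim disjE)
      assume "x \<in> verts ts" then show False using xi verts_hd[of i "[]" ts] by simp
    next
      assume "x = [length ts]" then show False using xi by simp
    next
      assume "x \<in> Cons (length ts) ` verts cs" then show False using xi by auto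
    qed
  qed
qed

lemma L0_Cons: "q \<noteq> [] \<Longrightarrow> L0 (n#q) (n#q') \<longleftrightarrow> L0 q q'"
proof
  assume qne: "q \<noteq> []" and L: "L0 (n#q) (n#q')"
  show "L0 q q'"
  proof (cases "below (n#q) (n#q')")
    case True then show ?thesis by (auto simp: L0_def below_def)
  next
    case False
    then obtain p i j r where H: "n # q = p @ [i]" "n # q' = p @ [j] @ r" "j < i"
      using L by (auto simp: L0_def)
    then obtain p' where "p = n # p'" using qne by (cases p) auto
    then show ?thesis using H by (auto simp: L0_def)
  qed
next
  assume "q \<noteq> []" and L: "L0 q q'"
  show "L0 (n#q) (n#q')"
  proof (cases "below q q'")
    case True then show ?thesis by (auto simp: L0_def below_def)
  next
    case False
    then obtain p i j r where H: "q = p @ [i]" "q' = p @ [j] @ r" "j < i"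
      using L by (auto simp: L0_def)
    then show ?thesis unfolding L0_def by (intro disjI2 exI[of _ "n#p"]) auto
  qed
qed

lemma L0_irrefl: "\<not> L0 v v"
  unfolding L0_def below_def by auto


definition LL :: "(nat list \<times> nat list) set" where "LL = {(v,w). L0 v w}"

lemma enums_ll: "enums (verts f) (ll f) = enums (verts f) LL"
  by (rule enums_cong) (auto simp: ll_char LL_def)

lemma mem_mset_enums[simp]: "x \<in># mset_set (enums (verts f) R) \<longleftrightarrow> x \<in> enums (verts f) R"
  by (simp add: finite_enums finite_verts)

lemma enums_set: "x \<in> enums V R \<Longrightarrow> set x = V"
  by (simp add: enums_def)

lemma arb_Nil[simp]: "arb [] = {#[]#}"
  by (simp add: arb_enums)

lemma arb_length: assumes "w \<in># arb f" shows "length w = nverts f"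
proof -
  have "w \<in> map (dec f) ` enums (verts f) (ll f)"
    using assms by (simp add: arb_enums finite_enums finite_verts)
  then obtain x where "x \<in> enums (verts f) (ll f)" "w = map (dec f) x" by blast
  then show ?thesis by (auto simp: nverts_def enums_def distinct_card[symmetric])
qed

lemma arb_snoc: "arb (ts@[PNode a cs]) = image_mset (\<lambda>w. w@[a]) (mshuf (arb ts) (arb cs))"
proof -
  define f where "f = ts@[PNode a cs]"
  define n where "n = length ts"
  define A where "A = verts ts"
  define B where "B = Cons n ` verts cs"
  define m where "m = [n]"
  have VF: "verts f = A \<union> B \<union> {m}" unfolding f_def A_def B_def m_def n_def verts_snoc by blast
  have mA: "m \<notin> A" unfolding m_def A_def n_def using verts_hd[of "length ts" "[]" ts] by auto
  have mB: "m \<notin> B" unfolding m_def B_def using verts_nonempty[where f=cs] by auto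
  have AB: "A \<inter> B = {}" unfolding A_def B_def n_def using verts_hd by fastforce
  have finA: "finite A" and finB: "finite B" unfolding A_def B_def by (auto simp: finite_verts)
  have e2: "enums (verts f) LL = (\<lambda>w. w@[m]) ` enums (verts f - {m}) LL"
  proof (rule enums_last)
    show "m \<in> verts f" using VF by blast
    show "(m,m) \<notin> LL" by (simp add: LL_def L0_irrefl)
    show "(m,x) \<in> LL \<and> (x,m) \<notin> LL" if "x \<in> verts f" "x \<noteq> m" for x
      using that L0_root[of x ts a cs] L0_root2[of x ts a cs] unfolding LL_def m_def n_def f_def by auto
  qed
  have vm: "verts f - {m} = A \<union> B" using VF mA mB by blast
  have e3: "mset_set (enums (A \<union> B) LL) = mshuf (mset_set (enums A LL)) (mset_set (enums B LL))"
  proof (rule enums_union[OF finA finB AB])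
    fix x y assume xy: "x \<in> A" "y \<in> B"
    then obtain q where q: "y = length ts # q" "q \<in> verts cs" unfolding B_def n_def by blast
    show "(x,y) \<notin> LL \<and> (y,x) \<notin> LL"
      using xy q L0_cross1[of x ts q cs] L0_cross2[of x ts q cs] unfolding A_def LL_def by auto
  qed
  have e4: "enums A LL = enums (verts ts) (ll ts)" unfolding A_def
    by (rule enums_cong) (auto simp: ll_char LL_def)
  have e5: "enums B LL = map (Cons n) ` enums (verts cs) (ll cs)" unfolding B_def
  proof (rule enums_map)
    show "inj_on (Cons n) (verts cs)" by simp
    show "((n#x), (n#y)) \<in> LL \<longleftrightarrow> (x,y) \<in> ll cs" if "x \<in> verts cs" "y \<in> verts cs" for x y
      using that L0_Cons[of x n y] verts_nonempty[of x cs] by (auto simp: LL_def ll_char)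
  qed
  define EA where "EA = mset_set (enums (verts ts) (ll ts))"
  define EC where "EC = mset_set (enums (verts cs) (ll cs))"
  have "arb f = image_mset (map (dec f)) (mset_set ((\<lambda>w. w@[m]) ` enums (A \<union> B) LL))"
    unfolding arb_enums enums_ll e2 vm ..
  also have "\<dots> = image_mset (map (dec f)) (image_mset (\<lambda>w. w@[m]) (mset_set (enums (A \<union> B) LL)))"
    by (subst image_mset_mset_set) (auto simp: inj_on_def)
  also have "\<dots> = image_mset (\<lambda>w. w@[a]) (image_mset (map (dec f)) (mshuf EA (image_mset (map (Cons n)) EC)))"
    unfolding e3 e4 e5 EA_def EC_def
    by (subst image_mset_mset_set[symmetric]) (auto simp: inj_on_def multiset.map_comp o_def dec_snoc2 f_def m_def n_def)
  also have "\<dots> = image_mset (\<lambda>w. w@[a]) (mshuf (image_mset (map (dec f)) EA) (image_mset (map (dec f) \<circ> map (Cons n)) EC))"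
    by (simp add: mshuf_map multiset.map_comp)
  also have "image_mset (map (dec f)) EA = arb ts"
    unfolding EA_def arb_enums
    by (rule image_mset_cong) (auto simp: f_def dec_snoc1 dest!: enums_set)
  also have "image_mset (map (dec f) \<circ> map (Cons n)) EC = arb cs"
    unfolding EC_def arb_enums
    by (rule image_mset_cong) (auto simp: f_def dec_snoc3 n_def dest!: enums_set)
  finally show ?thesis unfolding f_def .
qed

lemma mshuf_swap23: "mshuf (mshuf A B) C = mshuf (mshuf A C) B"
  by (simp add: mshuf_assoc mshuf_comm[of B C])

lemma arb_shuf: "(\<Sum>\<rho>\<in>#shuf \<sigma> \<tau>. arb \<rho>) = mshuf (arb \<sigma>) (arb \<tau>)"
proof (induction "length \<sigma> + length \<tau>" arbitrary: \<sigma> \<tau> rule: less_induct)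
  case less
  show ?case
  proof (cases "\<sigma> = [] \<or> \<tau> = []")
    case True
    then show ?thesis by auto
  next
    case False
    then obtain \<sigma>' T \<tau>' T' where st: "\<sigma> = \<sigma>'@[T]" "\<tau> = \<tau>'@[T']" by (metis rev_exhaust)
    obtain a cs where T: "T = PNode a cs" by (cases T)
    obtain b ds where T': "T' = PNode b ds" by (cases T')
    have IH1: "(\<Sum>\<rho>\<in>#shuf \<sigma>' \<tau>. arb \<rho>) = mshuf (arb \<sigma>') (arb \<tau>)"
      using less st by simp
    have IH2: "(\<Sum>\<rho>\<in>#shuf \<sigma> \<tau>'. arb \<rho>) = mshuf (arb \<sigma>) (arb \<tau>')"
      using less st by simp
    have "(\<Sum>\<rho>\<in>#shuf \<sigma> \<tau>. arb \<rho>) = (\<Sum>\<rho>\<in>#shuf \<sigma>' \<tau>. arb (\<rho>@[T])) + (\<Sum>\<rho>\<in>#shuf \<sigma> \<tau>'. arb (\<rho>@[T']))"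
      unfolding st shuf_snoc by (simp add: multiset.map_comp o_def)
    also have "\<dots> = image_mset (\<lambda>w. w@[a]) (mshuf (\<Sum>\<rho>\<in>#shuf \<sigma>' \<tau>. arb \<rho>) (arb cs))
        + image_mset (\<lambda>w. w@[b]) (mshuf (\<Sum>\<rho>\<in>#shuf \<sigma> \<tau>'. arb \<rho>) (arb ds))"
      unfolding T T' arb_snoc by (simp add: mshuf_sum_left image_mset_sum_mset multiset.map_comp o_def)
    also have "\<dots> = image_mset (\<lambda>w. w@[a]) (mshuf (mshuf (arb \<sigma>') (arb cs)) (arb \<tau>))
        + image_mset (\<lambda>w. w@[b]) (mshuf (arb \<sigma>) (mshuf (arb \<tau>') (arb ds)))"
      unfolding IH1 IH2 by (simp add: mshuf_swap23 mshuf_assoc)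
    also have "\<dots> = mshuf (arb \<sigma>) (arb \<tau>)"
      unfolding st T T' arb_snoc mshuf_snoc by simp
    finally show ?thesis .
  qed
qed


lemma restr_prefix:
  fixes t :: "'a ptree" and ts :: "'a pforest"
  shows "restr_t (p@q) W t = restr_t q {r. p@r \<in> W} t"
  and "restr_f (p@q) k W ts = restr_f q k {r. p@r \<in> W} ts"
  by (induction q W t and q k W ts rule: restr_t_restr_f.induct) auto

lemma restr_local:
  fixes t :: "'a ptree" and ts :: "'a pforest"
  shows "(\<forall>r. p@r \<in> W \<longleftrightarrow> p@r \<in> W') \<Longrightarrow> restr_t p W t = restr_t p W' t"
  and "(\<forall>i r. k \<le> i \<longrightarrow> i < k + length ts \<longrightarrow> (p@i#r \<in> W \<longleftrightarrow> p@i#r \<in> W')) \<Longrightarrow> restr_f p k W ts = restr_f p k W' ts"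
proof (induction p W t and p k W ts rule: restr_t_restr_f.induct)
  case (1 p W a cs)
  have "p \<in> W \<longleftrightarrow> p \<in> W'" using "1.prems"[rule_format, of "[]"] by simp
  moreover have "restr_f p 0 W cs = restr_f p 0 W' cs"
    using "1.prems" by (cases "p \<in> W") (intro "1.IH"; auto)+
  ultimately show ?case by simp
next
  case (2 p k W)
  then show ?case by simp
next
  case (3 p k W t ts)
  have "restr_t (p @ [k]) W t = restr_t (p @ [k]) W' t"
    using "3.prems" by (intro "3.IH"(1)) auto
  moreover have "restr_f p (Suc k) W ts = restr_f p (Suc k) W' ts"
    using "3.prems" by (intro "3.IH"(2)) auto
  ultimately show ?case by simp
qed

lemma restr_f_append: "restr_f p k W (xs@ys) = restr_f p k W xs @ restr_f p (k + length xs) W ys"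
  by (induction xs arbitrary: k) auto

lemma restr_snoc: "restr (ts@[PNode a cs]) W = restr ts W @
   (if [length ts] \<in> W then [PNode a (restr cs {q. length ts # q \<in> W})] else restr cs {q. length ts # q \<in> W})"
proof -
  have "restr_f [length ts] 0 W cs = restr cs {q. length ts # q \<in> W}"
    using restr_prefix(2)[of "[length ts]" "[]" 0 W cs] by (simp add: restr_def)
  then show ?thesis by (simp add: restr_def restr_f_append)
qed

lemma restr_local2: "(\<And>i r. i < length ts \<Longrightarrow> (i#r \<in> W \<longleftrightarrow> i#r \<in> W')) \<Longrightarrow> restr ts W = restr ts W'"
  unfolding restr_def by (rule restr_local(2)) auto

lemma restr_empty_tf:
  fixes t :: "'a ptree" and ts :: "'a pforest"
  shows "restr_t p {} t = []" and "restr_f p k {} ts = []"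
  by (induction p "{}::nat list set" t and p k "{}::nat list set" ts rule: restr_t_restr_f.induct) auto

lemma restr_empty[simp]: "restr ts {} = []"
  by (simp add: restr_def restr_empty_tf)

lemma restr_all: "restr f (verts f) = f"
proof (induction f rule: forest_induct)
  case Nil
  then show ?case by (simp add: restr_def)
next
  case (snoc ts a cs)
  have 1: "restr ts (verts (ts@[PNode a cs])) = ts"
  proof -
    have "restr ts (verts (ts@[PNode a cs])) = restr ts (verts ts)"
      by (rule restr_local2) (auto simp: verts_snoc)
    then show ?thesis using snoc by simp
  qed
  have 2: "restr cs {q. length ts # q \<in> verts (ts@[PNode a cs])} = cs"
  proof -
    have "restr cs {q. length ts # q \<in> verts (ts@[PNode a cs])} = restr cs (verts cs)"
      by (rule restr_local2) (auto simp: verts_snoc dest: verts_hd)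
    then show ?thesis using snoc by simp
  qed
  show ?case using 1 2 by (simp add: restr_snoc verts_snoc)
qed


definition DC :: "'a pforest \<Rightarrow> nat list set set" where "DC f = {D. downclosed f D}"

lemma downclosed_L0: "downclosed f D \<longleftrightarrow> D \<subseteq> verts f \<and> (\<forall>v\<in>D. \<forall>w\<in>verts f. L0 w v \<longrightarrow> w \<in> D)"
  unfolding downclosed_def ll_char by blast

lemma finite_DC: "finite (DC f)"
proof -
  have "DC f \<subseteq> Pow (verts f)" by (auto simp: DC_def downclosed_def)
  then show ?thesis using finite_verts finite_subset by blast
qed

lemma DC_Nil: "DC ([]::'a pforest) = {{}}"
  by (auto simp: DC_def downclosed_def)

definition glue :: "nat \<Rightarrow> nat list set \<Rightarrow> nat list set \<Rightarrow> nat list set" where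
  "glue n D1 D2 = insert [n] (D1 \<union> Cons n ` D2)"

lemma DC_snoc: "DC (ts@[PNode a cs]) = insert {} ((\<lambda>(D1,D2). glue (length ts) D1 D2) ` (DC ts \<times> DC cs))"
proof
  define n where "n = length ts"
  define f where "f = ts@[PNode a cs]"
  have vf: "verts f = verts ts \<union> {[n]} \<union> Cons n ` verts cs" unfolding f_def n_def verts_snoc ..
  show "DC (ts@[PNode a cs]) \<subseteq> insert {} ((\<lambda>(D1,D2). glue (length ts) D1 D2) ` (DC ts \<times> DC cs))"
  proof
    fix D assume "D \<in> DC (ts@[PNode a cs])"
    then have D: "downclosed f D" by (simp add: DC_def f_def)
    then have Dsub: "D \<subseteq> verts f" and Dcl: "\<And>v w. v \<in> D \<Longrightarrow> w \<in> verts f \<Longrightarrow> L0 w v \<Longrightarrow> w \<in> D"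
      unfolding downclosed_L0 by blast+
    show "D \<in> insert {} ((\<lambda>(D1,D2). glue (length ts) D1 D2) ` (DC ts \<times> DC cs))"
    proof (cases "D = {}")
      case True then show ?thesis by simp
    next
      case False
      then obtain v where v: "v \<in> D" by blast
      have nD: "[n] \<in> D"
      proof (cases "v = [n]")
        case True then show ?thesis using v by simp
      next
        case False
        then have "L0 [n] v" using L0_root[of v ts a cs] v Dsub unfolding f_def n_def by blast
        then show ?thesis using Dcl[of v "[n]"] v vf by blast
      qed
      define D1 where "D1 = D \<inter> verts ts"
      define D2 where "D2 = {q \<in> verts cs. n#q \<in> D}"
      have eq: "D = glue n D1 D2" unfolding glue_def D1_def D2_def using Dsub vf nD by blast
      have "D1 \<in> DC ts" unfolding DC_def downclosed_L0
      proof (intro CollectI conjI ballI impI)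
        show "D1 \<subseteq> verts ts" unfolding D1_def by blast
      next
        fix v w assume "v \<in> D1" "w \<in> verts ts" "L0 w v"
        then show "w \<in> D1" unfolding D1_def using Dcl vf by blast
      qed
      moreover have "D2 \<in> DC cs" unfolding DC_def downclosed_L0
      proof (intro CollectI conjI ballI impI)
        show "D2 \<subseteq> verts cs" unfolding D2_def by blast
      next
        fix v w assume vw: "v \<in> D2" "w \<in> verts cs" "L0 w v"
        then have "L0 (n#w) (n#v)" using L0_Cons[of w n v] verts_nonempty[of w cs] by simp
        moreover have "n#w \<in> verts f" using vw vf by blast
        ultimately show "w \<in> D2" using Dcl[of "n#v" "n#w"] vw unfolding D2_def by blast
      qed
      ultimately show ?thesis using eq n_def by blast
    qed
  qed
next
  define n where "n = length ts"
  define f where "f = ts@[PNode a cs]"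
  have vf: "verts f = verts ts \<union> {[n]} \<union> Cons n ` verts cs" unfolding f_def n_def verts_snoc ..
  show "insert {} ((\<lambda>(D1,D2). glue (length ts) D1 D2) ` (DC ts \<times> DC cs)) \<subseteq> DC (ts@[PNode a cs])"
  proof
    fix D assume "D \<in> insert {} ((\<lambda>(D1,D2). glue (length ts) D1 D2) ` (DC ts \<times> DC cs))"
    then consider "D = {}" | D1 D2 where "D1 \<in> DC ts" "D2 \<in> DC cs" "D = glue n D1 D2"
      unfolding n_def by blast
    then show "D \<in> DC (ts@[PNode a cs])"
    proof cases
      case 1 then show ?thesis by (simp add: DC_def downclosed_def)
    next
      case 2
      have D1s: "D1 \<subseteq> verts ts" and D1c: "\<And>v w. v \<in> D1 \<Longrightarrow> w \<in> verts ts \<Longrightarrow> L0 w v \<Longrightarrow> w \<in> D1"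
        using 2(1) unfolding DC_def downclosed_L0 by blast+
      have D2s: "D2 \<subseteq> verts cs" and D2c: "\<And>v w. v \<in> D2 \<Longrightarrow> w \<in> verts cs \<Longrightarrow> L0 w v \<Longrightarrow> w \<in> D2"
        using 2(2) unfolding DC_def downclosed_L0 by blast+
      have "downclosed f D" unfolding downclosed_L0
      proof (intro conjI ballI impI)
        show "D \<subseteq> verts f" using 2(3) D1s D2s vf unfolding glue_def by blast
      next
        fix v w assume v: "v \<in> D" and w: "w \<in> verts f" and L: "L0 w v"
        have vne: "v \<noteq> [n]" using L0_root2[of w ts a cs] w L unfolding f_def n_def by blast
        have "w = [n] \<or> w \<in> verts ts \<or> w \<in> Cons n ` verts cs" using w vf by blast
        then show "w \<in> D"
        proof (elim disjE)
          assume "w = [n]" then show ?thesis using 2(3) unfolding glue_def by blast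
        next
          assume wt: "w \<in> verts ts"
          have "v \<notin> Cons n ` D2"
          proof
            assume "v \<in> Cons n ` D2"
            then obtain q where "v = n#q" "q \<in> verts cs" using D2s by blast
            then show False using L0_cross1[of w ts q cs] wt L unfolding n_def by simp
          qed
          then have "v \<in> D1" using v vne 2(3) unfolding glue_def by blast
          then show ?thesis using D1c[of v w] wt L 2(3) unfolding glue_def by blast
        next
          assume "w \<in> Cons n ` verts cs"
          then obtain q where q: "w = n#q" "q \<in> verts cs" by blast
          have "v \<notin> D1"
          proof
            assume "v \<in> D1"
            then show False using L0_cross2[of v ts q cs] D1s q L unfolding n_def by blast
          qed
          then obtain q' where q': "v = n#q'" "q' \<in> D2" using v vne 2(3) unfolding glue_def by blast
          have "L0 q q'" using L q q' L0_Cons[of q n q'] verts_nonempty[of q cs] by simp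
          then have "q \<in> D2" using D2c q q' by blast
          then show ?thesis using q 2(3) unfolding glue_def by blast
        qed
      qed
      then show ?thesis by (simp add: DC_def f_def)
    qed
  qed
qed

lemma glue_inj: "inj_on (\<lambda>(D1,D2). glue (length ts) D1 D2) (DC ts \<times> DC cs)"
proof (rule inj_onI, clarify)
  fix D1 D2 E1 E2 assume H: "D1 \<in> DC ts" "D2 \<in> DC cs" "E1 \<in> DC ts" "E2 \<in> DC cs"
    "glue (length ts) D1 D2 = glue (length ts) E1 E2"
  have s: "D1 \<subseteq> verts ts" "E1 \<subseteq> verts ts" "D2 \<subseteq> verts cs" "E2 \<subseteq> verts cs"
    using H by (auto simp: DC_def downclosed_def)
  have r1: "glue (length ts) X1 X2 \<inter> verts ts = X1" if "X1 \<subseteq> verts ts" for X1 X2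
    using that verts_hd unfolding glue_def by fastforce
  have r2: "{q \<in> verts cs. length ts # q \<in> glue (length ts) X1 X2} = X2" if "X1 \<subseteq> verts ts" "X2 \<subseteq> verts cs" for X1 X2
    using that verts_hd verts_nonempty[where f=cs] unfolding glue_def by fastforce
  show "D1 = E1 \<and> D2 = E2" using r1[of D1 D2] r1[of E1 E2] r2[of D1 D2] r2[of E1 E2] s H(5) by metis
qed

lemma sum_DC_snoc:
  "(\<Sum>D\<in>DC (ts@[PNode a cs]). F D) = F {} + (\<Sum>D1\<in>DC ts. \<Sum>D2\<in>DC cs. F (glue (length ts) D1 D2))"
proof -
  have ne: "{} \<notin> (\<lambda>(D1,D2). glue (length ts) D1 D2) ` (DC ts \<times> DC cs)" by (auto simp: glue_def)
  have fin: "finite ((\<lambda>(D1,D2). glue (length ts) D1 D2) ` (DC ts \<times> DC cs))"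
    using finite_DC by blast
  have "(\<Sum>D\<in>DC (ts@[PNode a cs]). F D) = F {} + (\<Sum>D\<in>(\<lambda>(D1,D2). glue (length ts) D1 D2) ` (DC ts \<times> DC cs). F D)"
    unfolding DC_snoc using ne fin by simp
  also have "(\<Sum>D\<in>(\<lambda>(D1,D2). glue (length ts) D1 D2) ` (DC ts \<times> DC cs). F D) = (\<Sum>p\<in>DC ts \<times> DC cs. F (glue (length ts) (fst p) (snd p)))"
    by (subst sum.reindex[OF glue_inj]) (simp add: case_prod_beta)
  also have "\<dots> = (\<Sum>D1\<in>DC ts. \<Sum>D2\<in>DC cs. F (glue (length ts) D1 D2))"
    by (simp add: sum.cartesian_product case_prod_beta)
  finally show ?thesis .
qed

lemma glue_restr: "D1 \<in> DC ts \<Longrightarrow> D2 \<in> DC cs \<Longrightarrow>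
  restr (ts@[PNode a cs]) (glue (length ts) D1 D2) = restr ts D1 @ [PNode a (restr cs D2)]"
proof -
  assume H: "D1 \<in> DC ts" "D2 \<in> DC cs"
  have s: "D1 \<subseteq> verts ts" "D2 \<subseteq> verts cs" using H by (auto simp: DC_def downclosed_def)
  have 1: "restr ts (glue (length ts) D1 D2) = restr ts D1"
    by (rule restr_local2) (auto simp: glue_def)
  have nD1: "length ts # r \<notin> D1" for r using s verts_hd by fastforce
  have 2: "restr cs {q. length ts # q \<in> glue (length ts) D1 D2} = restr cs D2"
    by (rule restr_local2) (use nD1 in \<open>auto simp: glue_def\<close>)
  show ?thesis using 1 2 by (simp add: restr_snoc glue_def)
qed

lemma glue_compl: "D1 \<in> DC ts \<Longrightarrow> D2 \<in> DC cs \<Longrightarrow>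
  verts (ts@[PNode a cs]) - glue (length ts) D1 D2 = (verts ts - D1) \<union> Cons (length ts) ` (verts cs - D2)"
proof -
  assume "D1 \<in> DC ts"
  then have s1: "D1 \<subseteq> verts ts" by (auto simp: DC_def downclosed_def)
  have h1: "length ts # q \<notin> verts ts" for q using verts_hd by blast
  have h2: "[] \<notin> verts cs" using verts_nonempty by blast
  show ?thesis unfolding verts_snoc glue_def
  proof (intro set_eqI iffI)
    fix x assume "x \<in> verts ts \<union> {[length ts]} \<union> Cons (length ts) ` verts cs - insert [length ts] (D1 \<union> Cons (length ts) ` D2)"
    then show "x \<in> verts ts - D1 \<union> Cons (length ts) ` (verts cs - D2)" by blast
  next
    fix x assume "x \<in> verts ts - D1 \<union> Cons (length ts) ` (verts cs - D2)"
    then show "x \<in> verts ts \<union> {[length ts]} \<union> Cons (length ts) ` verts cs - insert [length ts] (D1 \<union> Cons (length ts) ` D2)"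
      using h1 h2 s1 by auto
  qed
qed


definition cls :: "('v \<times> 'v) set \<Rightarrow> 'v set \<Rightarrow> 'v \<Rightarrow> 'v set" where
  "cls R V v = {w\<in>V. (v,w) \<in> R\<^sup>*}"

lemma comps_cls: "comps f V' = cls (comp_rel f V') V' ` V'"
  by (auto simp: comps_def cls_def)

lemma cls_self: "v \<in> V \<Longrightarrow> v \<in> cls R V v" by (simp add: cls_def)
lemma cls_sub: "cls R V v \<subseteq> V" by (auto simp: cls_def)

lemma cls_restrict:
  assumes R: "R \<subseteq> (X \<union> Y) \<times> (X \<union> Y)" and cross: "\<And>x y. x \<in> X \<Longrightarrow> y \<in> Y \<Longrightarrow> (x,y) \<notin> R \<and> (y,x) \<notin> R"
    and v: "v \<in> X"
  shows "cls R (X \<union> Y) v = cls (R \<inter> X \<times> X) X v"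
proof -
  have key: "w \<in> X \<and> (v,w) \<in> (R \<inter> X \<times> X)\<^sup>*" if "(v,w) \<in> R\<^sup>*" for w
    using that
  proof (induction rule: rtrancl_induct)
    case base show ?case using v by simp
  next
    case (step y z)
    have "z \<in> X \<union> Y" using step(2) R by blast
    moreover have "z \<notin> Y" using step cross by blast
    ultimately have "z \<in> X" by blast
    then show ?case using step by (meson IntI mem_Sigma_iff rtrancl.rtrancl_into_rtrancl)
  qed
  have "(R \<inter> X \<times> X)\<^sup>* \<subseteq> R\<^sup>*" by (rule rtrancl_mono) blast
  then show ?thesis unfolding cls_def using key by blast
qed

lemma cls_map:
  assumes inj: "inj_on \<psi> X" and R: "R \<subseteq> X \<times> X" and v: "v \<in> X"
  shows "cls (map_prod \<psi> \<psi> ` R) (\<psi> ` X) (\<psi> v) = \<psi> ` cls R X v"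
proof -
  have A: "\<exists>w\<in>X. z = \<psi> w \<and> (v,w) \<in> R\<^sup>*" if "(\<psi> v, z) \<in> (map_prod \<psi> \<psi> ` R)\<^sup>*" for z
    using that
  proof (induction rule: rtrancl_induct)
    case base then show ?case using v by blast
  next
    case (step y z)
    then obtain w where w: "w \<in> X" "y = \<psi> w" "(v,w) \<in> R\<^sup>*" by blast
    from step(2) obtain a b where ab: "(a,b) \<in> R" "y = \<psi> a" "z = \<psi> b" by auto
    have abX: "a \<in> X" "b \<in> X" using ab R by auto
    then have "a = w" using inj w ab unfolding inj_on_def by metis
    then have "(v,b) \<in> R\<^sup>*" using ab w by (meson rtrancl.rtrancl_into_rtrancl)
    then show ?case using ab abX by blast
  qed
  have B: "(\<psi> v, \<psi> w) \<in> (map_prod \<psi> \<psi> ` R)\<^sup>*" if "(v,w) \<in> R\<^sup>*" for w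
    using that
  proof (induction rule: rtrancl_induct)
    case base then show ?case by simp
  next
    case (step y z)
    have "(\<psi> y, \<psi> z) \<in> map_prod \<psi> \<psi> ` R" using step(2) by force
    then show ?case using step(3) by (meson rtrancl.rtrancl_into_rtrancl)
  qed
  show ?thesis unfolding cls_def
  proof (intro set_eqI iffI)
    fix z assume "z \<in> {w \<in> \<psi> ` X. (\<psi> v, w) \<in> (map_prod \<psi> \<psi> ` R)\<^sup>*}"
    then obtain w where "w \<in> X" "z = \<psi> w" "(v,w) \<in> R\<^sup>*" using A by blast
    then show "z \<in> \<psi> ` {w \<in> X. (v, w) \<in> R\<^sup>*}" by blast
  next
    fix z assume "z \<in> \<psi> ` {w \<in> X. (v, w) \<in> R\<^sup>*}"
    then show "z \<in> {w \<in> \<psi> ` X. (\<psi> v, w) \<in> (map_prod \<psi> \<psi> ` R)\<^sup>*}" using B by blast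
  qed
qed

lemma comps_snoc:
  assumes sub: "V' \<subseteq> verts (ts@[PNode a cs])" and nV: "[length ts] \<notin> V'"
  shows "comps (ts@[PNode a cs]) V' = comps ts (V' \<inter> verts ts) \<union>
     image (Cons (length ts)) ` comps cs {q \<in> verts cs. length ts # q \<in> V'}"
proof -
  define n where "n = length ts"
  define f where "f = ts@[PNode a cs]"
  define V1 where "V1 = V' \<inter> verts ts"
  define V2 where "V2 = {q \<in> verts cs. n # q \<in> V'}"
  define Y where "Y = Cons n ` V2"
  define R where "R = comp_rel f V'"
  have VV: "V' = V1 \<union> Y" using sub nV unfolding V1_def Y_def V2_def n_def verts_snoc by blast
  have Rsub: "R \<subseteq> (V1 \<union> Y) \<times> (V1 \<union> Y)" unfolding R_def comp_rel_def VV by blast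
  have cross: "(x,y) \<notin> R \<and> (y,x) \<notin> R" if xy: "x \<in> V1" "y \<in> Y" for x y
  proof -
    obtain q where q: "y = n#q" "q \<in> verts cs" using xy unfolding Y_def V2_def by blast
    have "x \<in> verts ts" using xy unfolding V1_def by blast
    then have "\<not> L0 x y" "\<not> L0 y x" using L0_cross1[of x ts q cs] L0_cross2[of x ts q cs] q
      unfolding n_def by auto
    then show ?thesis unfolding R_def comp_rel_def ll_char by auto
  qed
  have R1: "R \<inter> V1 \<times> V1 = comp_rel ts V1"
  proof -
    have "x \<in> V1 \<Longrightarrow> x \<in> verts f" for x using sub unfolding V1_def f_def by blast
    then show ?thesis unfolding R_def comp_rel_def ll_char V1_def by auto
  qed
  have R2: "R \<inter> Y \<times> Y = map_prod (Cons n) (Cons n) ` comp_rel cs V2"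
  proof (intro set_eqI iffI)
    fix p assume "p \<in> R \<inter> Y \<times> Y"
    then obtain u w where p: "p = (n#u, n#w)" "u \<in> V2" "w \<in> V2" "(n#u, n#w) \<in> R"
      unfolding Y_def by blast
    have "u \<noteq> []" "w \<noteq> []" using p verts_nonempty unfolding V2_def by blast+
    then have "(u,w) \<in> comp_rel cs V2" using p L0_Cons[of u n w] L0_Cons[of w n u]
      unfolding R_def comp_rel_def ll_char V2_def by auto
    then show "p \<in> map_prod (Cons n) (Cons n) ` comp_rel cs V2" using p by force
  next
    fix p assume "p \<in> map_prod (Cons n) (Cons n) ` comp_rel cs V2"
    then obtain u w where p: "p = (n#u, n#w)" "(u,w) \<in> comp_rel cs V2" by auto
    then have uw: "u \<in> V2" "w \<in> V2" "L0 u w \<or> L0 w u" unfolding comp_rel_def ll_char by auto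
    have "u \<noteq> []" "w \<noteq> []" using uw verts_nonempty unfolding V2_def by blast+
    then have "L0 (n#u) (n#w) \<or> L0 (n#w) (n#u)" using uw L0_Cons by blast
    moreover have "n#u \<in> V'" "n#w \<in> V'" using uw unfolding V2_def by auto
    moreover have "n#u \<in> verts f" "n#w \<in> verts f" using calculation(2,3) sub f_def by auto
    ultimately show "p \<in> R \<inter> Y \<times> Y" using p uw unfolding R_def comp_rel_def ll_char Y_def by auto
  qed
  have c1: "cls R V' v = cls (comp_rel ts V1) V1 v" if "v \<in> V1" for v
    unfolding VV R1[symmetric] by (rule cls_restrict[OF Rsub cross that])
  have c2: "cls R V' (n#q) = Cons n ` cls (comp_rel cs V2) V2 q" if "q \<in> V2" for q
  proof -
    have "cls R V' (n#q) = cls R (Y \<union> V1) (n#q)" using VV by (simp add: Un_commute)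
    also have "\<dots> = cls (R \<inter> Y \<times> Y) Y (n#q)"
      by (rule cls_restrict) (use Rsub cross that Y_def in auto)
    also have "\<dots> = cls (map_prod (Cons n) (Cons n) ` comp_rel cs V2) (Cons n ` V2) (n#q)"
      by (subst R2) (simp add: Y_def)
    also have "\<dots> = Cons n ` cls (comp_rel cs V2) V2 q"
      by (rule cls_map) (auto simp: that comp_rel_def)
    finally show ?thesis .
  qed
  have "comps f V' = cls R V' ` V1 \<union> cls R V' ` Y" unfolding comps_cls R_def[symmetric] using VV by blast
  also have "cls R V' ` V1 = comps ts V1" unfolding comps_cls using c1 by auto
  also have "cls R V' ` Y = image (Cons n) ` comps cs V2" unfolding comps_cls Y_def using c2
    by (auto simp: image_image)
  finally show ?thesis unfolding f_def n_def V1_def V2_def .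
qed

lemma comps_ne: "C \<in> comps f V' \<Longrightarrow> C \<noteq> {} \<and> C \<subseteq> V'"
  unfolding comps_cls using cls_self cls_sub by fastforce

lemma finite_comps: "finite V' \<Longrightarrow> finite (comps f V')"
  unfolding comps_cls by simp

definition P :: "('b list \<Rightarrow> real) \<Rightarrow> 'b pforest \<Rightarrow> nat list set \<Rightarrow> real" where
  "P X f V' = (\<Prod>C\<in>comps f V'. lin X (arb (restr f C)))"

lemma P_empty[simp]: "P X f {} = 1"
  by (simp add: P_def comps_def)

lemma P_snoc:
  assumes sub: "V' \<subseteq> verts (ts@[PNode a cs])" and nV: "[length ts] \<notin> V'"
  shows "P X (ts@[PNode a cs]) V' = P X ts (V' \<inter> verts ts) * P X cs {q \<in> verts cs. length ts # q \<in> V'}"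
proof -
  define n where "n = length ts"
  define f where "f = ts@[PNode a cs]"
  define V1 where "V1 = V' \<inter> verts ts"
  define V2 where "V2 = {q \<in> verts cs. n # q \<in> V'}"
  have fin1: "finite V1" "finite V2" unfolding V1_def V2_def using finite_verts[of ts] finite_verts[of cs] by auto
  have F: "comps f V' = comps ts V1 \<union> image (Cons n) ` comps cs V2"
    unfolding f_def n_def V1_def V2_def by (rule comps_snoc[OF sub nV])
  have disj: "comps ts V1 \<inter> image (Cons n) ` comps cs V2 = {}"
  proof -
    have "C = {}" if "C \<in> comps ts V1" "C \<in> image (Cons n) ` comps cs V2" for C
    proof -
      have "C \<subseteq> verts ts" using comps_ne[OF that(1)] unfolding V1_def by blast
      moreover have "\<forall>x\<in>C. hd x = n" using that(2) by auto
      ultimately show ?thesis using verts_hd[of n _ ts] unfolding n_def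
        by (metis equals0I list.collapse subsetD verts_nonempty less_irrefl)
    qed
    then show ?thesis using comps_ne by blast
  qed
  have r1: "restr f C = restr ts C" if "C \<in> comps ts V1" for C
  proof -
    have "C \<subseteq> verts ts" using comps_ne[OF that] unfolding V1_def by blast
    then have "[n] \<notin> C" "{q. n # q \<in> C} = {}" using verts_hd[of n _ ts] unfolding n_def by auto
    then show ?thesis unfolding f_def by (simp add: restr_snoc n_def)
  qed
  have r2: "restr f (Cons n ` C) = restr cs C" if "C \<in> comps cs V2" for C
  proof -
    have "C \<subseteq> verts cs" using comps_ne[OF that] unfolding V2_def by blast
    then have "[n] \<notin> Cons n ` C" using verts_nonempty[where f=cs] by auto
    moreover have "restr ts (Cons n ` C) = restr ts {}"
      by (rule restr_local2) (auto simp: n_def)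
    moreover have "{q. n # q \<in> Cons n ` C} = C" by auto
    ultimately show ?thesis unfolding f_def by (simp add: restr_snoc n_def)
  qed
  have "P X f V' = (\<Prod>C\<in>comps ts V1. lin X (arb (restr f C))) * (\<Prod>C\<in>image (Cons n) ` comps cs V2. lin X (arb (restr f C)))"
    unfolding P_def F by (rule prod.union_disjoint) (use fin1 finite_comps disj in auto)
  also have "(\<Prod>C\<in>comps ts V1. lin X (arb (restr f C))) = P X ts V1"
    unfolding P_def using r1 by simp
  also have "(\<Prod>C\<in>image (Cons n) ` comps cs V2. lin X (arb (restr f C))) = P X cs V2"
  proof -
    have "inj_on (image (Cons n)) (comps cs V2)" by (rule inj_onI) (simp add: inj_image_eq_iff)
    then show ?thesis unfolding P_def by (simp add: prod.reindex r2)
  qed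
  finally show ?thesis unfolding f_def V1_def V2_def n_def .
qed

lemma P_all: "P X (ts@[PNode a cs]) (verts (ts@[PNode a cs])) = lin X (arb (ts@[PNode a cs]))"
proof -
  define f where "f = ts@[PNode a cs]"
  define n where "n = length ts"
  define V where "V = verts f"
  define R where "R = comp_rel f V"
  have nV: "[n] \<in> V" unfolding V_def f_def n_def verts_snoc by blast
  have toroot: "([n], w) \<in> R\<^sup>*" "(w, [n]) \<in> R\<^sup>*" if "w \<in> V" for w
  proof -
    have "([n], w) \<in> R \<and> (w, [n]) \<in> R" if "w \<noteq> [n]"
      using L0_root[of w ts a cs] \<open>w \<in> V\<close> nV that
      unfolding R_def comp_rel_def ll_char V_def f_def n_def by auto
    then show "([n], w) \<in> R\<^sup>*" "(w, [n]) \<in> R\<^sup>*" by (cases "w = [n]"; auto)+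
  qed
  have "cls R V v = V" if "v \<in> V" for v
    using toroot that unfolding cls_def by (blast intro: rtrancl_trans)
  then have "comps f V = {V}" unfolding comps_cls R_def[symmetric] using nV by auto
  then show ?thesis unfolding P_def f_def V_def by (simp add: restr_all)
qed

lemma mshuf_left_comm: "mshuf {#x#} (mshuf {#y#} M) = mshuf {#y#} (mshuf {#x#} M)"
  by (simp add: mshuf_assoc[symmetric] shuf_comm[of x y])

lemma shuf_comps_lin:
  assumes mult: "\<And>\<sigma> \<tau>. lin Y (shuf \<sigma> \<tau>) = Y \<sigma> * Y \<tau>" and Y1: "Y [] = 1" and fin: "finite V'"
  shows "lin Y (shuf_comps f V') = (\<Prod>C\<in>comps f V'. Y (restr f C))"
proof -
  define g where "g = (\<lambda>C acc. mshuf {#restr f C#} acc)"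
  interpret cf: comp_fun_commute g
    by unfold_locales (auto simp: fun_eq_iff g_def mshuf_left_comm)
  have "lin Y (fold_mset g {#[]#} (mset_set S)) = (\<Prod>C\<in>S. Y (restr f C))" if "finite S" for S
    using that
  proof (induction S rule: finite_induct)
    case empty then show ?case by (simp add: Y1)
  next
    case (insert x S)
    have "fold_mset g {#[]#} (mset_set (insert x S)) = g x (fold_mset g {#[]#} (mset_set S))"
      using insert by simp
    then have "lin Y (fold_mset g {#[]#} (mset_set (insert x S))) = lin Y (mshuf {#restr f x#} (fold_mset g {#[]#} (mset_set S)))"
      by (simp add: g_def)
    also have "\<dots> = Y (restr f x) * lin Y (fold_mset g {#[]#} (mset_set S))"
      using lin_mshuf[of Y, OF mult] by simp
    finally show ?case using insert by simp
  qed
  then show ?thesis unfolding shuf_comps_def g_def[symmetric] using finite_comps[OF fin] by blast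
qed


lemma sum_mset_sum_mset: "(\<Sum>x\<in>#(\<Sum>M\<in>#MM. F M). f x) = (\<Sum>M\<in>#MM. \<Sum>x\<in>#F M. (f x :: 'c::comm_monoid_add))"
  by (induction MM) auto

lemma sum_set_mset_swap: "(\<Sum>i\<in>I. \<Sum>x\<in>#M. F i x) = (\<Sum>x\<in>#M. \<Sum>i\<in>I. (F i x :: 'c::comm_monoid_add))"
  by (induction M) (auto simp: sum.distrib)

lemma sum_arb_snoc: "(\<Sum>w\<in>#arb (ts@[PNode a cs]). g w) = (\<Sum>u\<in>#arb ts. \<Sum>v\<in>#arb cs. \<Sum>z\<in>#shuf u v. (g (z@[a]) :: 'c::comm_monoid_add))"
  by (simp add: arb_snoc mshuf_def sum_mset_sum_mset multiset.map_comp o_def)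

lemma chen_aux:
  fixes X :: "real \<Rightarrow> real \<Rightarrow> 'b list \<Rightarrow> real" and f :: "'b pforest"
  assumes mult: "\<And>s t \<sigma> \<tau>. lin (X s t) (shuf \<sigma> \<tau>) = X s t \<sigma> * X s t \<tau>"
    and X1: "\<And>s t. X s t [] = 1"
  shows "(\<Sum>D\<in>DC f. P (X s u) f (verts f - D) * (\<Sum>w\<in>#arb (restr f D). g w))
     = (\<Sum>w\<in>#arb f. \<Sum>p\<in>#deconc w. X s u (fst p) * g (snd p))"
proof (induction f arbitrary: g rule: forest_induct)
  case Nil
  then show ?case by (simp add: DC_Nil X1)
next
  case (snoc ts a cs)
  define Xu where "Xu = X s u"
  define n where "n = length ts"
  define f where "f = ts@[PNode a cs]"
  define h where "h u v = (\<Sum>z\<in>#shuf u v. g (z@[a]))" for u v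
  define k where "k u' = (\<Sum>v\<in>#arb cs. \<Sum>p\<in>#deconc v. Xu (fst p) * h u' (snd p))" for u'
  have trm: "P Xu f (verts f - glue n D1 D2) * (\<Sum>w\<in>#arb (restr f (glue n D1 D2)). g w)
      = P Xu ts (verts ts - D1) * P Xu cs (verts cs - D2) * (\<Sum>u\<in>#arb (restr ts D1). \<Sum>v\<in>#arb (restr cs D2). h u v)"
    if D: "D1 \<in> DC ts" "D2 \<in> DC cs" for D1 D2
  proof -
    have s: "D1 \<subseteq> verts ts" "D2 \<subseteq> verts cs" using D by (auto simp: DC_def downclosed_def)
    define V' where "V' = verts f - glue n D1 D2"
    have V': "V' = (verts ts - D1) \<union> Cons n ` (verts cs - D2)"
      unfolding V'_def f_def n_def by (rule glue_compl[OF D])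
    have sub: "V' \<subseteq> verts f" unfolding V'_def by blast
    have nV: "[n] \<notin> V'" unfolding V'_def glue_def by blast
    have h1: "n # q \<notin> verts ts" for q using verts_hd unfolding n_def by blast
    have e1: "V' \<inter> verts ts = verts ts - D1" unfolding V' using h1 by auto
    have e2: "{q \<in> verts cs. n # q \<in> V'} = verts cs - D2" unfolding V' using h1 by auto
    have "P Xu f V' = P Xu ts (verts ts - D1) * P Xu cs (verts cs - D2)"
      using P_snoc[of V' ts a cs Xu] sub nV e1 e2 unfolding f_def n_def by simp
    moreover have "(\<Sum>w\<in>#arb (restr f (glue n D1 D2)). g w) = (\<Sum>u\<in>#arb (restr ts D1). \<Sum>v\<in>#arb (restr cs D2). h u v)"
      unfolding f_def n_def glue_restr[OF D] sum_arb_snoc h_def ..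
    ultimately show ?thesis unfolding V'_def by simp
  qed
  have IHcs: "(\<Sum>D2\<in>DC cs. P Xu cs (verts cs - D2) * (\<Sum>v\<in>#arb (restr cs D2). h u' v)) = k u'" for u'
    unfolding k_def Xu_def by (rule snoc.IH(2))
  have inner: "(\<Sum>D2\<in>DC cs. P Xu cs (verts cs - D2) * (\<Sum>u\<in>#A. \<Sum>v\<in>#arb (restr cs D2). h u v)) = (\<Sum>u\<in>#A. k u)" for A
  proof -
    have "(\<Sum>D2\<in>DC cs. P Xu cs (verts cs - D2) * (\<Sum>u\<in>#A. \<Sum>v\<in>#arb (restr cs D2). h u v))
        = (\<Sum>D2\<in>DC cs. \<Sum>u\<in>#A. P Xu cs (verts cs - D2) * (\<Sum>v\<in>#arb (restr cs D2). h u v))"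
      by (simp add: sum_mset_distrib_left)
    also have "\<dots> = (\<Sum>u\<in>#A. \<Sum>D2\<in>DC cs. P Xu cs (verts cs - D2) * (\<Sum>v\<in>#arb (restr cs D2). h u v))"
      by (rule sum_set_mset_swap)
    finally show ?thesis using IHcs by simp
  qed
  have IHts: "(\<Sum>D1\<in>DC ts. P Xu ts (verts ts - D1) * (\<Sum>u\<in>#arb (restr ts D1). k u))
     = (\<Sum>w\<in>#arb ts. \<Sum>p\<in>#deconc w. Xu (fst p) * k (snd p))"
    unfolding Xu_def by (rule snoc.IH(1))
  have L: "(\<Sum>D\<in>DC f. P Xu f (verts f - D) * (\<Sum>w\<in>#arb (restr f D). g w))
     = lin Xu (arb f) * g [] + (\<Sum>w\<in>#arb ts. \<Sum>p\<in>#deconc w. Xu (fst p) * k (snd p))"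
  proof -
    have "(\<Sum>D\<in>DC f. P Xu f (verts f - D) * (\<Sum>w\<in>#arb (restr f D). g w))
      = P Xu f (verts f) * g [] + (\<Sum>D1\<in>DC ts. \<Sum>D2\<in>DC cs. P Xu f (verts f - glue n D1 D2) * (\<Sum>w\<in>#arb (restr f (glue n D1 D2)). g w))"
      unfolding f_def n_def sum_DC_snoc by simp
    also have "P Xu f (verts f) = lin Xu (arb f)" unfolding f_def by (rule P_all)
    also have "(\<Sum>D1\<in>DC ts. \<Sum>D2\<in>DC cs. P Xu f (verts f - glue n D1 D2) * (\<Sum>w\<in>#arb (restr f (glue n D1 D2)). g w))
       = (\<Sum>D1\<in>DC ts. P Xu ts (verts ts - D1) * (\<Sum>D2\<in>DC cs. P Xu cs (verts cs - D2) * (\<Sum>u\<in>#arb (restr ts D1). \<Sum>v\<in>#arb (restr cs D2). h u v)))"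
      by (simp add: trm sum_distrib_left mult.assoc)
    also have "\<dots> = (\<Sum>D1\<in>DC ts. P Xu ts (verts ts - D1) * (\<Sum>u\<in>#arb (restr ts D1). k u))"
      by (simp add: inner)
    finally show ?thesis using IHts by simp
  qed
  have R: "(\<Sum>w\<in>#arb f. \<Sum>p\<in>#deconc w. Xu (fst p) * g (snd p))
     = lin Xu (arb f) * g [] + (\<Sum>w\<in>#arb ts. \<Sum>p\<in>#deconc w. Xu (fst p) * k (snd p))"
  proof -
    have sh: "(\<Sum>z\<in>#shuf u' v. \<Sum>p\<in>#deconc z. Xu (fst p) * g (snd p @ [a]))
        = (\<Sum>p1\<in>#deconc u'. \<Sum>p2\<in>#deconc v. Xu (fst p1) * Xu (fst p2) * h (snd p1) (snd p2))" for u' v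
    proof -
      have "(\<Sum>z\<in>#shuf u' v. \<Sum>p\<in>#deconc z. Xu (fst p) * g (snd p @ [a]))
        = (\<Sum>p1\<in>#deconc u'. \<Sum>p2\<in>#deconc v. \<Sum>z1\<in>#shuf (fst p1) (fst p2). \<Sum>z2\<in>#shuf (snd p1) (snd p2). Xu z1 * g (z2 @ [a]))"
        by (rule shuf_deconc[where F="\<lambda>z1 z2. Xu z1 * g (z2 @ [a])"])
      also have "\<dots> = (\<Sum>p1\<in>#deconc u'. \<Sum>p2\<in>#deconc v. (\<Sum>z1\<in>#shuf (fst p1) (fst p2). Xu z1) * h (snd p1) (snd p2))"
        unfolding h_def by (simp only: lin_prod_sum)
      also have "\<dots> = (\<Sum>p1\<in>#deconc u'. \<Sum>p2\<in>#deconc v. Xu (fst p1) * Xu (fst p2) * h (snd p1) (snd p2))"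
        using mult[of s u] unfolding Xu_def lin_def by simp
      finally show ?thesis .
    qed
    have "(\<Sum>w\<in>#arb f. \<Sum>p\<in>#deconc w. Xu (fst p) * g (snd p))
      = (\<Sum>u'\<in>#arb ts. \<Sum>v\<in>#arb cs. \<Sum>z\<in>#shuf u' v. Xu (z@[a]) * g [] + (\<Sum>p\<in>#deconc z. Xu (fst p) * g (snd p @ [a])))"
      unfolding f_def sum_arb_snoc by (simp add: deconc_snoc multiset.map_comp o_def)
    also have "\<dots> = (\<Sum>u'\<in>#arb ts. \<Sum>v\<in>#arb cs. \<Sum>z\<in>#shuf u' v. Xu (z@[a]) * g [])
        + (\<Sum>u'\<in>#arb ts. \<Sum>v\<in>#arb cs. \<Sum>z\<in>#shuf u' v. \<Sum>p\<in>#deconc z. Xu (fst p) * g (snd p @ [a]))"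
      by (simp add: sum_mset.distrib)
    also have "(\<Sum>u'\<in>#arb ts. \<Sum>v\<in>#arb cs. \<Sum>z\<in>#shuf u' v. Xu (z@[a]) * g []) = lin Xu (arb f) * g []"
      unfolding lin_def f_def sum_arb_snoc by (simp add: sum_mset_distrib_right)
    also have "(\<Sum>u'\<in>#arb ts. \<Sum>v\<in>#arb cs. \<Sum>z\<in>#shuf u' v. \<Sum>p\<in>#deconc z. Xu (fst p) * g (snd p @ [a]))
       = (\<Sum>u'\<in>#arb ts. \<Sum>v\<in>#arb cs. \<Sum>p1\<in>#deconc u'. \<Sum>p2\<in>#deconc v. Xu (fst p1) * Xu (fst p2) * h (snd p1) (snd p2))"
      by (simp add: sh)
    also have "\<dots> = (\<Sum>u'\<in>#arb ts. \<Sum>p1\<in>#deconc u'. \<Sum>v\<in>#arb cs. \<Sum>p2\<in>#deconc v. Xu (fst p1) * Xu (fst p2) * h (snd p1) (snd p2))"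
      by (rule arg_cong[where f=sum_mset], rule image_mset_cong, rule sum_mset.swap)
    also have "\<dots> = (\<Sum>w\<in>#arb ts. \<Sum>p\<in>#deconc w. Xu (fst p) * k (snd p))"
      unfolding k_def by (simp add: sum_mset_distrib_left mult.assoc)
    finally show ?thesis .
  qed
  show ?case using L R unfolding f_def Xu_def by simp
qed


lemma sum_mset_sum_set: "(\<Sum>x\<in>#(\<Sum>i\<in>I. M i). f x) = (\<Sum>i\<in>I. \<Sum>x\<in>#M i. (f x :: 'c::comm_monoid_add))"
  by (induction I rule: infinite_finite_induct) auto

lemma lin_alt: "lin F M = (\<Sum>x\<in>#M. F x)" by (simp add: lin_def)

lemma abs_sum_mset: "\<bar>\<Sum>x\<in>#M. (f x::real)\<bar> \<le> (\<Sum>x\<in>#M. \<bar>f x\<bar>)"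
  by (induction M) (auto intro: order_trans[OF abs_triangle_ineq])

theorem mainTheorem12:
  fixes \<gamma> :: real and X :: "real \<Rightarrow> real \<Rightarrow> ('a::finite) list \<Rightarrow> real"
  assumes "0 < \<gamma>" and "\<gamma> \<le> 1"
    and "rough_path \<gamma> length shuf deconc [] X"
  shows "rough_path \<gamma> nverts shuf mkw_cop [] (\<lambda>s t f. lin (X s t) (arb f))"
proof -
  have X1: "\<And>s t. X s t [] = 1" and mult: "\<And>s t \<sigma> \<tau>. lin (X s t) (shuf \<sigma> \<tau>) = X s t \<sigma> * X s t \<tau>"
    and chen: "\<And>s u t \<tau>. (\<Sum>p\<in>#deconc \<tau>. X s u (fst p) * X u t (snd p)) = X s t \<tau>"
    and bnd: "\<And>\<sigma>. \<exists>C. \<forall>s t. s \<noteq> t \<longrightarrow> \<bar>X s t \<sigma>\<bar> \<le> C * \<bar>t - s\<bar> powr (\<gamma> * real (length \<sigma>))"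
    using assms(3) unfolding rough_path_def by blast+
  define Y where "Y s t f = lin (X s t) (arb f)" for s t and f :: "'a pforest"
  have Y1: "Y s t [] = 1" for s t by (simp add: Y_def X1)
  have Ymult: "lin (Y s t) (shuf \<sigma> \<tau>) = Y s t \<sigma> * Y s t \<tau>" for s t \<sigma> \<tau>
  proof -
    have "lin (Y s t) (shuf \<sigma> \<tau>) = lin (X s t) (\<Sum>\<rho>\<in>#shuf \<sigma> \<tau>. arb \<rho>)"
      unfolding lin_sum_mset lin_alt[of "Y s t"] Y_def ..
    also have "\<dots> = lin (X s t) (mshuf (arb \<sigma>) (arb \<tau>))" by (simp add: arb_shuf)
    also have "\<dots> = Y s t \<sigma> * Y s t \<tau>" unfolding Y_def by (rule lin_mshuf[OF mult])
    finally show ?thesis .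
  qed
  have Ychen: "(\<Sum>p\<in>#mkw_cop f. Y s u (fst p) * Y u t (snd p)) = Y s t f" for s u t f
  proof -
    have "(\<Sum>p\<in>#mkw_cop f. Y s u (fst p) * Y u t (snd p))
        = (\<Sum>D\<in>DC f. \<Sum>\<sigma>\<in>#shuf_comps f (verts f - D). Y s u \<sigma> * Y u t (restr f D))"
      unfolding mkw_cop_def DC_def[symmetric] sum_mset_sum_set by (simp add: multiset.map_comp o_def)
    also have "\<dots> = (\<Sum>D\<in>DC f. P (X s u) f (verts f - D) * (\<Sum>w\<in>#arb (restr f D). X u t w))"
    proof (rule sum.cong[OF refl])
      fix D
      have "(\<Sum>\<sigma>\<in>#shuf_comps f (verts f - D). Y s u \<sigma> * Y u t (restr f D))
          = lin (Y s u) (shuf_comps f (verts f - D)) * Y u t (restr f D)"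
        by (simp add: lin_def sum_mset_distrib_right)
      also have "lin (Y s u) (shuf_comps f (verts f - D)) = (\<Prod>C\<in>comps f (verts f - D). Y s u (restr f C))"
        by (rule shuf_comps_lin[OF Ymult Y1]) (simp add: finite_verts)
      finally show "(\<Sum>\<sigma>\<in>#shuf_comps f (verts f - D). Y s u \<sigma> * Y u t (restr f D))
          = P (X s u) f (verts f - D) * (\<Sum>w\<in>#arb (restr f D). X u t w)"
        by (simp add: P_def Y_def lin_def)
    qed
    also have "\<dots> = (\<Sum>w\<in>#arb f. \<Sum>p\<in>#deconc w. X s u (fst p) * X u t (snd p))"
      by (rule chen_aux[OF mult X1])
    also have "\<dots> = Y s t f" by (simp add: chen Y_def lin_def)
    finally show ?thesis .
  qed
  have Ybnd: "\<exists>C. \<forall>s t. s \<noteq> t \<longrightarrow> \<bar>Y s t f\<bar> \<le> C * \<bar>t - s\<bar> powr (\<gamma> * real (nverts f))" for f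
  proof -
    obtain Cf where Cf: "\<And>w s t. s \<noteq> t \<Longrightarrow> \<bar>X s t w\<bar> \<le> Cf w * \<bar>t - s\<bar> powr (\<gamma> * real (length w))"
      using bnd by metis
    have "\<bar>Y s t f\<bar> \<le> (\<Sum>w\<in>#arb f. Cf w) * \<bar>t - s\<bar> powr (\<gamma> * real (nverts f))" if "s \<noteq> t" for s t
    proof -
      have "\<bar>Y s t f\<bar> \<le> (\<Sum>w\<in>#arb f. \<bar>X s t w\<bar>)" unfolding Y_def lin_def by (rule abs_sum_mset)
      also have "\<dots> \<le> (\<Sum>w\<in>#arb f. Cf w * \<bar>t - s\<bar> powr (\<gamma> * real (nverts f)))"
        by (rule sum_mset_mono) (use Cf that arb_length in metis)
      also have "\<dots> = (\<Sum>w\<in>#arb f. Cf w) * \<bar>t - s\<bar> powr (\<gamma> * real (nverts f))"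
        by (simp add: sum_mset_distrib_right)
      finally show ?thesis .
    qed
    then show ?thesis by blast
  qed
  show ?thesis unfolding rough_path_def
    using Y1 Ymult Ychen Ybnd unfolding Y_def by simp
qed


end
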